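(* Fix a formula $A$. Let $\Gamma\{-\}$ be an annotated unary context, $\Delta$ an annotated sequent, $\Sigma$ a finite set of formulas, and suppose $\vdash^A \Gamma\{[\Diamond A^\perp_\Sigma,\Delta]\}$. Let $B\in\Sigma$. If $\Delta$ contains (at any nesting depth) no bracket annotated with $B$, then $\vdash^A \Gamma\{[\Diamond A^\perp_{\Sigma'},\Diamond B^\perp,\Delta]\}$ for some $\Sigma'\subseteq\Sigma\setminus\{B\}$ (and some annotation on $\Diamond B^\perp$).
   Context: Formulas: over a countable set of atoms $\alpha$ with duals $\alpha^\perp$, $A,B ::= \alpha \mid \alpha^\perp \mid A\land B \mid A\lor B \mid \Box A \mid \Diamond A$; negation $A^\perp$ by De Morgan duality ($(\alpha)^\perp=\alpha^\perp$, $(\alpha^\perp)^\perp=\alpha$, $\land/\lor$ dual, $(\Box A)^\perp=\Diamond A^\perp$, $(\Diamond A)^\perp=\Box A^\perp$). Annotated sequents: $\Gamma,\Delta ::= \cdot \mid \Gamma, C \mid \Gamma, \Diamond A_\Sigma \mid \Gamma,[\Delta]_B$, where $C$ is a formula not of the form $\Diamond A$, $\Sigma$ is a finite set of formulas (annotation set) and $B$ a formula (bracket annotation); sequents are taken up to exchange. Annotated unary contexts $\Gamma\{-\}$ (one hole) are defined analogously, $\Gamma\{\Delta\}$ is hole-filling, $\Gamma\{\}=\Gamma\{\cdot\}$. Annotated rules (whenever an active formula in a premise is a $\Diamond$-formula, its annotation is simply discarded): (id) $\Gamma\{\alpha^\perp,\alpha\}$, provided every $\Diamond$-formula occurrence in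 it has annotation $\emptyset$; ($\land$) from $\Gamma_1\{A\}$ and $\Gamma_2\{B\}$ infer $\Gamma\{A\land B\}$; ($\lor$) from $\Gamma\{A,B\}$ infer $\Gamma\{A\lor B\}$; ($\Box$) from $\Gamma\{[\Diamond A^\perp_\Sigma, A]_A\}$ infer $\Gamma\{\Box A\}$; ($\Diamond$) from $\Gamma\{\Delta\{[\Delta',A]_B\},\Diamond A_\Sigma\}$ infer $\Gamma\{\Delta\{[\Delta']_B\},\Diamond A_{\Sigma\cup\{B\}}\}$ (for any unary context $\Delta\{-\}$, possibly of depth $0$); (cut) from $\Gamma_1\{A\}$ and $\Gamma_2\{A^\perp\}$ infer $\Gamma\{\}$. In the two-premise rules, $\Gamma_1\{-\},\Gamma_2\{-\},\Gamma\{-\}$ are identical except for annotation sets of $\Diamond$-formula occurrences (bracket annotations coincide), and each $\Diamond$-formula occurrence in $\Gamma\{-\}$ has as annotation the union of the annotations of the corresponding occurrences in $\Gamma_1,\Gamma_2$. Fix a formula $A$; $\vdash^A\Gamma$ means the annotated sequent $\Gamma$ is derivable with the annotated rules (id), ($\land$), ($\lor$), ($\Box$), ($\Diamond$) together with those instances of (cut) whose cut formula is $A$. Convention: annotations not displayed in a statement (on $\Diamond$-formulas or brackets) are arbitrary; bracket annotations are the same in hypothesis and conclusion, while undisplayed $\Diamond$-annotations in the conclusion are existentially quantified. *)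

theory Defs
  imports Main "HOL-Library.Multiset" "HOL-Library.FSet"
begin

datatype fm = At nat | NAt nat | And fm fm | Or fm fm | Box fm | Dia fm

fun neg :: "fm \<Rightarrow> fm" where
  "neg (At a) = NAt a"
| "neg (NAt a) = At a"
| "neg (And A B) = Or (neg A) (neg B)"
| "neg (Or A B) = And (neg A) (neg B)"
| "neg (Box A) = Dia (neg A)"
| "neg (Dia A) = Box (neg A)"

section \<open>Annotated sequents (up to exchange = multisets)\<close>

text \<open>An item of an annotated sequent: a formula C (intended not of the form Dia _),
  an annotated diamond formula  Dia A with annotation set, or a bracket with contents
  and bracket annotation.\<close>
datatype item = F fm | D fm "fm fset" | Br "item multiset" fm

type_synonym seq = "item multiset"

datatype ctx = Hole "item multiset" | CBr "item multiset" ctx fm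

primrec fill :: "ctx \<Rightarrow> seq \<Rightarrow> seq" where
  "fill (Hole M) S = M + S"
| "fill (CBr M C b) S = add_mset (Br (fill C S) b) M"

primrec wf_item :: "item \<Rightarrow> bool" where
  "wf_item (F A) = (\<forall>B. A \<noteq> Dia B)"
| "wf_item (D A X) = True"
| "wf_item (Br M b) = (\<forall>x\<in>#image_mset wf_item M. x)"

primrec allempty_item :: "item \<Rightarrow> bool" where
  "allempty_item (F A) = True"
| "allempty_item (D A X) = (X = {||})"
| "allempty_item (Br M b) = (\<forall>x\<in>#image_mset allempty_item M. x)"

primrec banns :: "item \<Rightarrow> fm set" where
  "banns (F A) = {}"
| "banns (D A X) = {}"
| "banns (Br M b) = insert b (\<Union> (set_mset (image_mset banns M)))"

primrec erase :: "item \<Rightarrow> item" where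
  "erase (F A) = F A"
| "erase (D A X) = D A {||}"
| "erase (Br M b) = Br (image_mset erase M) b"

primrec erase_ctx :: "ctx \<Rightarrow> ctx" where
  "erase_ctx (Hole M) = Hole (image_mset erase M)"
| "erase_ctx (CBr M C b) = CBr (image_mset erase M) (erase_ctx C) b"

text \<open>An active formula in a premise: diamond formulas carry an (arbitrary, discarded)
  annotation.\<close>
fun fitem :: "fm \<Rightarrow> fm fset \<Rightarrow> item" where
  "fitem (Dia A) X = D A X"
| "fitem A X = F A"

text \<open>Merging of contexts in two-premise rules: identical except for diamond
  annotations, which are united.\<close>
inductive merge_item :: "item \<Rightarrow> item \<Rightarrow> item \<Rightarrow> bool"
  and merge_ms :: "seq \<Rightarrow> seq \<Rightarrow> seq \<Rightarrow> bool" where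
  "merge_item (F A) (F A) (F A)"
| "merge_item (D A X) (D A Y) (D A (X |\<union>| Y))"
| "merge_ms M1 M2 M \<Longrightarrow> merge_item (Br M1 b) (Br M2 b) (Br M b)"
| "merge_ms {#} {#} {#}"
| "merge_item i1 i2 i \<Longrightarrow> merge_ms M1 M2 M \<Longrightarrow>
     merge_ms (add_mset i1 M1) (add_mset i2 M2) (add_mset i M)"

inductive merge_ctx :: "ctx \<Rightarrow> ctx \<Rightarrow> ctx \<Rightarrow> bool" where
  "merge_ms M1 M2 M \<Longrightarrow> merge_ctx (Hole M1) (Hole M2) (Hole M)"
| "merge_ms M1 M2 M \<Longrightarrow> merge_ctx C1 C2 C \<Longrightarrow>
     merge_ctx (CBr M1 C1 b) (CBr M2 C2 b) (CBr M C b)"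

inductive der :: "fm \<Rightarrow> seq \<Rightarrow> bool" for Acut :: fm where
  ax: "S = fill C {#F (NAt a), F (At a)#} \<Longrightarrow> \<forall>i\<in>#S. wf_item i \<Longrightarrow>
       \<forall>i\<in>#S. allempty_item i \<Longrightarrow> der Acut S"
| conj: "der Acut (fill C1 {#fitem A X#}) \<Longrightarrow> der Acut (fill C2 {#fitem B Y#}) \<Longrightarrow>
       merge_ctx C1 C2 C \<Longrightarrow> der Acut (fill C {#F (And A B)#})"
| disj: "der Acut (fill C {#fitem A X, fitem B Y#}) \<Longrightarrow> der Acut (fill C {#F (Or A B)#})"
| box: "der Acut (fill C {#Br {#D (neg A) \<Sigma>, fitem A X#} A#}) \<Longrightarrow>
       der Acut (fill C {#F (Box A)#})"
| dia: "der Acut (fill G (add_mset (D A \<Sigma>) (fill Dc {#Br (add_mset (fitem A X) M) b#}))) \<Longrightarrow>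
       der Acut (fill G (add_mset (D A (finsert b \<Sigma>)) (fill Dc {#Br M b#})))"
| cut: "der Acut (fill C1 {#fitem Acut X#}) \<Longrightarrow> der Acut (fill C2 {#fitem (neg Acut) Y#}) \<Longrightarrow>
       merge_ctx C1 C2 C \<Longrightarrow> der Acut (fill C {#})"

end

theory Submission
  imports Defs
begin


fun addtop :: "seq \<Rightarrow> ctx \<Rightarrow> ctx" where
  "addtop N (Hole M) = Hole (N + M)"
| "addtop N (CBr M C c) = CBr (N + M) C c"

fun cmp :: "ctx \<Rightarrow> ctx \<Rightarrow> ctx" where
  "cmp (Hole M) H = addtop M H"
| "cmp (CBr M C c) H = CBr M (cmp C H) c"

lemma fill_addtop[simp]: "fill (addtop N H) X = N + fill H X"
  by (cases H) auto

lemma fill_cmp[simp]: "fill (cmp C H) X = fill C (fill H X)"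
  by (induction C) auto

lemma addtop_addtop[simp]: "addtop N (addtop K H) = addtop (N + K) H"
  by (cases H) (auto simp: add.assoc)

lemma cmp_addtop: "cmp C (addtop N H) = cmp (cmp C (Hole N)) H"
  by (induction C) (auto simp: add.assoc)

lemma dec:
  "fill C X = fill G {#y#} \<Longrightarrow>
   (\<exists>Q Z b. y = Br Z b \<and> C = cmp G (CBr {#} Q b) \<and> Z = fill Q X) \<or>
   (\<exists>Q. G = cmp C Q \<and> X = fill Q {#y#}) \<or>
   (\<exists>R M Cb Gb. C = cmp R (addtop (M + fill Gb {#y#}) Cb) \<and> G = cmp R (addtop (M + fill Cb X) Gb))"
proof (induction C arbitrary: G)
  case (Hole M)
  show ?case
  proof (cases G)
    case (Hole N)
    with Hole.prems have e: "M + X = add_mset y N" by simp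
    show ?thesis
    proof (cases "y \<in># X")
      case True
      then obtain X' where X: "X = add_mset y X'" by (metis multi_member_split)
      with e have "N = M + X'" by simp
      then show ?thesis using Hole X by (intro disjI2 disjI1 exI[of _ "Hole X'"]) auto
    next
      case False
      then have "y \<in># M" using e by (metis union_iff add_mset_add_single union_single_eq_member)
      then obtain M' where M: "M = add_mset y M'" by (metis multi_member_split)
      with e have "N = M' + X" by simp
      then show ?thesis using Hole M
        by (intro disjI2 disjI2 exI[of _ "Hole {#}"] exI[of _ M'] exI[of _ "Hole {#}"]) auto
    qed
  next
    case (CBr N G' c)
    with Hole.prems have e: "M + X = add_mset (Br (fill G' {#y#}) c) N" by simp
    show ?thesis
    proof (cases "Br (fill G' {#y#}) c \<in># X")
      case True
      then obtain X' where X: "X = add_mset (Br (fill G' {#y#}) c) X'" by (metis multi_member_split)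
      with e have "N = M + X'" by simp
      then show ?thesis using CBr X by (intro disjI2 disjI1 exI[of _ "CBr X' G' c"]) auto
    next
      case False
      then have "Br (fill G' {#y#}) c \<in># M" using e by (metis union_iff union_single_eq_member add_mset_add_single)
      then obtain M' where M: "M = add_mset (Br (fill G' {#y#}) c) M'" by (metis multi_member_split)
      with e have "N = M' + X" by simp
      then show ?thesis using CBr M
        by (intro disjI2 disjI2 exI[of _ "Hole {#}"] exI[of _ M'] exI[of _ "Hole {#}"] exI[of _ "CBr {#} G' c"]) auto
    qed
  qed
next
  case (CBr M C c)
  show ?case
  proof (cases G)
    case (Hole N)
    with CBr.prems have e: "add_mset (Br (fill C X) c) M = add_mset y N" by simp
    then show ?thesis
    proof (cases "y = Br (fill C X) c")
      case True
      then have "M = N" using e by simp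
      then show ?thesis using True Hole by (intro disjI1 exI[of _ C]) auto
    next
      case False
      then obtain K where K: "M = add_mset y K" "N = add_mset (Br (fill C X) c) K"
        using e by (auto simp: add_eq_conv_ex)
      then show ?thesis using Hole
        by (intro disjI2 disjI2 exI[of _ "Hole {#}"] exI[of _ K] exI[of _ "CBr {#} C c"] exI[of _ "Hole {#}"]) auto
    qed
  next
    case (CBr N G' e)
    with CBr.prems have eq: "add_mset (Br (fill C X) c) M = add_mset (Br (fill G' {#y#}) e) N" by simp
    then show ?thesis
    proof (cases "Br (fill C X) c = Br (fill G' {#y#}) e")
      case True
      then have "M = N" "c = e" "fill C X = fill G' {#y#}" using eq by auto
      from CBr.IH[OF this(3)] show ?thesis
      proof (elim disjE exE conjE)
        fix Q Z b assume "y = Br Z b" "C = cmp G' (CBr {#} Q b)" "Z = fill Q X"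
        then show ?thesis using \<open>M = N\<close> \<open>c = e\<close> CBr by (intro disjI1 exI[of _ Q]) auto
      next
        fix Q assume "G' = cmp C Q" "X = fill Q {#y#}"
        then show ?thesis using \<open>M = N\<close> \<open>c = e\<close> CBr by (intro disjI2 disjI1 exI[of _ Q]) auto
      next
        fix R M0 Cb Gb assume "C = cmp R (addtop (M0 + fill Gb {#y#}) Cb)" "G' = cmp R (addtop (M0 + fill Cb X) Gb)"
        then show ?thesis using \<open>M = N\<close> \<open>c = e\<close> CBr by (intro disjI2 disjI2 exI[of _ "CBr M R c"]) auto
      qed
    next
      case False
      then obtain K where K: "M = add_mset (Br (fill G' {#y#}) e) K" "N = add_mset (Br (fill C X) c) K"
        using eq by (auto simp: add_eq_conv_ex)
      then show ?thesis using CBr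
        by (intro disjI2 disjI2 exI[of _ "Hole {#}"] exI[of _ K] exI[of _ "CBr {#} C c"] exI[of _ "CBr {#} G' e"]) auto
    qed
  qed
qed

abbreviation EE :: "seq \<Rightarrow> seq" where "EE M \<equiv> image_mset erase M"

lemma erase_fill[simp]: "EE (fill C X) = fill (erase_ctx C) (EE X)"
  by (induction C) auto

lemma erase_ctx_addtop[simp]: "erase_ctx (addtop N H) = addtop (EE N) (erase_ctx H)"
  by (cases H) auto

lemma erase_ctx_cmp[simp]: "erase_ctx (cmp C H) = cmp (erase_ctx C) (erase_ctx H)"
  by (induction C) auto

lemma erase_F: "erase w = F A \<Longrightarrow> w = F A"
  by (cases w) auto
lemma erase_D: "erase w = D A X \<Longrightarrow> \<exists>Y. w = D A Y"
  by (cases w) auto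
lemma erase_Br: "erase w = Br M b \<Longrightarrow> \<exists>N. w = Br N b \<and> EE N = M"
  by (cases w) auto

lemma erase_fitem[simp]: "erase (fitem A X) = fitem A {||}"
  by (cases A) auto

lemma erase_fitem_inv: "erase w = fitem A X \<Longrightarrow> \<exists>Y. w = fitem A Y"
  by (cases A; cases w) auto

lemma lift_add: "EE W = add_mset a M \<Longrightarrow> \<exists>w W'. W = add_mset w W' \<and> erase w = a \<and> EE W' = M"
  by (metis msed_map_invR)

lemma lift_plus: "EE W = A + B \<Longrightarrow> \<exists>W1 W2. W = W1 + W2 \<and> EE W1 = A \<and> EE W2 = B"
  using image_mset_eq_plusD by metis

lemma lift_fill: "EE W = EE (fill C X) \<Longrightarrow>
   \<exists>C' X'. W = fill C' X' \<and> erase_ctx C' = erase_ctx C \<and> EE X' = EE X"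
proof (induction C arbitrary: W)
  case (Hole M)
  then obtain W1 W2 where "W = W1 + W2" "EE W1 = EE M" "EE W2 = EE X"
    using lift_plus[of W "EE M" "EE X"] by auto
  then show ?case by (intro exI[of _ "Hole W1"] exI[of _ W2]) auto
next
  case (CBr M C c)
  then have "EE W = add_mset (Br (EE (fill C X)) c) (EE M)" by simp
  then obtain w W' where w: "W = add_mset w W'" "erase w = Br (EE (fill C X)) c" "EE W' = EE M"
    using lift_add by metis
  then obtain N where N: "w = Br N c" "EE N = EE (fill C X)" using erase_Br by metis
  from CBr.IH[OF N(2)] obtain C' X' where "N = fill C' X'" "erase_ctx C' = erase_ctx C" "EE X' = EE X"
    by blast
  then show ?case using w N by (intro exI[of _ "CBr W' C' c"] exI[of _ X']) auto
qed

lemma lift_addtop: "erase_ctx G = erase_ctx (addtop N H) \<Longrightarrow>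
   \<exists>N' H'. G = addtop N' H' \<and> EE N' = EE N \<and> erase_ctx H' = erase_ctx H"
proof (cases G)
  case (Hole M)
  assume a: "erase_ctx G = erase_ctx (addtop N H)"
  then obtain K where H: "H = Hole K" using Hole by (cases H) auto
  then have "EE M = EE N + EE K" using a Hole by simp
  then obtain M1 M2 where "M = M1 + M2" "EE M1 = EE N" "EE M2 = EE K" using lift_plus by metis
  then show ?thesis using Hole H by (intro exI[of _ M1] exI[of _ "Hole M2"]) auto
next
  case (CBr M C c)
  assume a: "erase_ctx G = erase_ctx (addtop N H)"
  then obtain K H0 where H: "H = CBr K H0 c" using CBr by (cases H) auto
  then have "EE M = EE N + EE K" "erase_ctx C = erase_ctx H0" using a CBr by auto
  then obtain M1 M2 where "M = M1 + M2" "EE M1 = EE N" "EE M2 = EE K" using lift_plus by metis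
  then show ?thesis using CBr H \<open>erase_ctx C = erase_ctx H0\<close>
    by (intro exI[of _ M1] exI[of _ "CBr M2 C c"]) auto
qed

lemma lift_cmp: "erase_ctx G = erase_ctx (cmp R H) \<Longrightarrow>
   \<exists>R' H'. G = cmp R' H' \<and> erase_ctx R' = erase_ctx R \<and> erase_ctx H' = erase_ctx H"
proof (induction R arbitrary: G)
  case (Hole M)
  then obtain N' H' where "G = addtop N' H'" "EE N' = EE M" "erase_ctx H' = erase_ctx H"
    using lift_addtop by (metis cmp.simps(1))
  then show ?case by (intro exI[of _ "Hole N'"] exI[of _ H']) auto
next
  case (CBr M R c)
  then obtain M' G0 where G: "G = CBr M' G0 c" "EE M' = EE M" "erase_ctx G0 = erase_ctx (cmp R H)"
    by (cases G) auto
  from CBr.IH[OF G(3)] obtain R' H' where "G0 = cmp R' H'" "erase_ctx R' = erase_ctx R" "erase_ctx H' = erase_ctx H"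
    by blast
  then show ?case using G by (intro exI[of _ "CBr M' R' c"] exI[of _ H']) auto
qed

lemma lift_CBr: "erase_ctx G = erase_ctx (CBr M C c) \<Longrightarrow>
   \<exists>M' C'. G = CBr M' C' c \<and> EE M' = EE M \<and> erase_ctx C' = erase_ctx C"
  by (cases G) auto

lemma lift_Hole: "erase_ctx G = erase_ctx (Hole M) \<Longrightarrow>
   \<exists>M'. G = Hole M' \<and> EE M' = EE M"
  by (cases G) auto


lemma merge_erase:
  "(merge_item i1 i2 i \<longrightarrow> erase i1 = erase i \<and> erase i2 = erase i) \<and>
   (merge_ms M1 M2 M \<longrightarrow> EE M1 = EE M \<and> EE M2 = EE M)"
  by (induction rule: merge_item_merge_ms.induct) auto

lemma merge_ms_erase: "merge_ms M1 M2 M \<Longrightarrow> EE M1 = EE M \<and> EE M2 = EE M"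
  using merge_erase by blast

lemma merge_ctx_erase: "merge_ctx C1 C2 C \<Longrightarrow> erase_ctx C1 = erase_ctx C \<and> erase_ctx C2 = erase_ctx C"
  by (induction rule: merge_ctx.induct) (auto dest: merge_ms_erase)

lemma merge_ms_exists_aux:
  assumes "\<And>x y. x \<in># M \<Longrightarrow> erase x = erase y \<Longrightarrow> \<exists>z. merge_item x y z"
    and "EE M = EE N"
  shows "\<exists>K. merge_ms M N K"
  using assms
proof (induction M arbitrary: N)
  case empty
  then show ?case by (auto intro: merge_item_merge_ms.intros)
next
  case (add x M)
  then obtain y N' where "N = add_mset y N'" "erase y = erase x" "EE N' = EE M"
    using lift_add[of N "erase x" "EE M"] by auto
  moreover obtain z where "merge_item x y z" using add.prems(1) \<open>erase y = erase x\<close> by force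
  moreover obtain K where "merge_ms M N' K" using add by (metis \<open>EE N' = EE M\<close> union_iff add_mset_add_single)
  ultimately show ?case by (auto intro: merge_item_merge_ms.intros)
qed

lemma merge_item_exists: "erase x = erase y \<Longrightarrow> \<exists>z. merge_item x y z"
proof (induction x arbitrary: y)
  case (F A) then show ?case by (metis erase_F erase.simps(1) merge_item_merge_ms.intros(1))
next
  case (D A X) then show ?case by (metis erase_D erase.simps(2) merge_item_merge_ms.intros(2))
next
  case (Br M b)
  then obtain N where "y = Br N b" "EE N = EE M" using erase_Br[of y] by force
  moreover have "\<exists>K. merge_ms M N K"
    using merge_ms_exists_aux[of M N] Br.IH \<open>EE N = EE M\<close> by metis
  ultimately show ?case by (auto intro: merge_item_merge_ms.intros)
qed

lemma merge_ms_exists: "EE M = EE N \<Longrightarrow> \<exists>K. merge_ms M N K"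
  using merge_ms_exists_aux merge_item_exists by metis

lemma merge_ctx_exists: "erase_ctx C1 = erase_ctx C2 \<Longrightarrow> \<exists>C. merge_ctx C1 C2 C"
proof (induction C1 arbitrary: C2)
  case (Hole M)
  then obtain N where "C2 = Hole N" "EE M = EE N" by (cases C2) auto
  then show ?case using merge_ms_exists by (metis merge_ctx.intros(1))
next
  case (CBr M C c)
  then obtain N D0 where "C2 = CBr N D0 c" "EE M = EE N" "erase_ctx C = erase_ctx D0" by (cases C2) auto
  then show ?case using merge_ms_exists CBr.IH by (metis merge_ctx.intros(2))
qed

lemma merge_ms_plus: "merge_ms A1 A2 A \<Longrightarrow> merge_ms B1 B2 B \<Longrightarrow> merge_ms (A1+B1) (A2+B2) (A+B)"
proof (induction A1 A2 A rule: merge_item_merge_ms.inducts(2)[where ?P1.0="\<lambda>_ _ _. True"])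
  case (5 i1 i2 i M1 M2 M)
  then show ?case by (auto intro: merge_item_merge_ms.intros)
qed auto

lemma merge_ms_single: "merge_item i1 i2 i \<Longrightarrow> merge_ms {#i1#} {#i2#} {#i#}"
  by (auto intro: merge_item_merge_ms.intros)

lemma merge_ms_add: "merge_item i1 i2 i \<Longrightarrow> merge_ms M1 M2 M \<Longrightarrow> merge_ms (add_mset i1 M1) (add_mset i2 M2) (add_mset i M)"
  by (auto intro: merge_item_merge_ms.intros)


lemma merge_item_refl: "merge_item x x x"
proof (induction x)
  case (F A) then show ?case by (auto intro: merge_item_merge_ms.intros)
next
  case (D A X) then show ?case using merge_item_merge_ms.intros(2)[of A X X] by simp
next
  case (Br M b)
  have "merge_ms M M M" using Br
  proof (induction M)
    case empty then show ?case by (auto intro: merge_item_merge_ms.intros)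
  next
    case (add x M) then show ?case by (auto intro: merge_item_merge_ms.intros)
  qed
  then show ?case by (auto intro: merge_item_merge_ms.intros)
qed

lemma merge_ms_refl: "merge_ms M M M"
  by (induction M) (auto intro: merge_item_merge_ms.intros merge_item_refl)

lemma merge_ctx_refl: "merge_ctx C C C"
  by (induction C) (auto intro: merge_ctx.intros merge_ms_refl)

lemma merge_ctx_addtop: "merge_ctx H1 H2 H \<Longrightarrow> merge_ms N1 N2 N \<Longrightarrow> merge_ctx (addtop N1 H1) (addtop N2 H2) (addtop N H)"
  by (induction rule: merge_ctx.induct) (auto intro: merge_ctx.intros merge_ms_plus)

lemma merge_ctx_cmp: "merge_ctx R1 R2 R \<Longrightarrow> merge_ctx H1 H2 H \<Longrightarrow> merge_ctx (cmp R1 H1) (cmp R2 H2) (cmp R H)"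
  by (induction rule: merge_ctx.induct) (auto intro: merge_ctx.intros merge_ctx_addtop)

lemma merge_fill: "merge_ctx C1 C2 C \<Longrightarrow> merge_ms X1 X2 X \<Longrightarrow> merge_ms (fill C1 X1) (fill C2 X2) (fill C X)"
  by (induction rule: merge_ctx.induct) (auto intro: merge_item_merge_ms.intros merge_ms_plus)

lemma merge_ms_split: "merge_ms M1 M2 M \<Longrightarrow> M = A + B \<Longrightarrow>
  \<exists>A1 B1 A2 B2. M1 = A1 + B1 \<and> M2 = A2 + B2 \<and> merge_ms A1 A2 A \<and> merge_ms B1 B2 B"
proof (induction M1 M2 M arbitrary: A B rule: merge_item_merge_ms.inducts(2)[where ?P1.0="\<lambda>_ _ _. True"])
  case 4
  then show ?case by (auto intro: merge_item_merge_ms.intros)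
next
  case (5 i1 i2 i M1 M2 M)
  show ?case
  proof (cases "i \<in># A")
    case True
    then obtain A' where A: "A = add_mset i A'" by (metis multi_member_split)
    then have "M = A' + B" using 5 by simp
    from "5.IH"[OF this] obtain A1 B1 A2 B2 where "M1 = A1 + B1 \<and> M2 = A2 + B2 \<and> merge_ms A1 A2 A' \<and> merge_ms B1 B2 B" by blast
    then show ?thesis using A 5 by (intro exI[of _ "add_mset i1 A1"] exI[of _ B1] exI[of _ "add_mset i2 A2"] exI[of _ B2]) (auto intro: merge_item_merge_ms.intros)
  next
    case False
    then have "i \<in># B" using 5 by (metis union_iff add_mset_add_single union_single_eq_member)
    then obtain B' where B: "B = add_mset i B'" by (metis multi_member_split)
    then have "M = A + B'" using 5 by simp
    from "5.IH"[OF this] obtain A1 B1 A2 B2 where "M1 = A1 + B1 \<and> M2 = A2 + B2 \<and> merge_ms A1 A2 A \<and> merge_ms B1 B2 B'" by blast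
    then show ?thesis using B 5 by (intro exI[of _ A1] exI[of _ "add_mset i1 B1"] exI[of _ A2] exI[of _ "add_mset i2 B2"]) (auto intro: merge_item_merge_ms.intros)
  qed
qed auto

inductive_cases merge_ms_emptyE: "merge_ms M1 M2 {#}"
inductive_cases merge_itemDE: "merge_item i1 i2 (D A X)"
inductive_cases merge_itemBrE: "merge_item i1 i2 (Br M b)"
inductive_cases merge_itemFE: "merge_item i1 i2 (F A)"

lemma merge_ms_empty: "merge_ms M1 M2 {#} \<Longrightarrow> M1 = {#} \<and> M2 = {#}"
  by (erule merge_ms_emptyE) auto

lemma merge_ms_single_inv: "merge_ms M1 M2 {#i#} \<Longrightarrow> \<exists>i1 i2. M1 = {#i1#} \<and> M2 = {#i2#} \<and> merge_item i1 i2 i"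
proof -
  assume "merge_ms M1 M2 {#i#}"
  then show ?thesis
  proof (cases rule: merge_ms.cases)
    case (2 i1 i2 i' M1' M2' M')
    then show ?thesis using merge_ms_empty by auto
  qed auto
qed

lemma merge_ms_add_inv: "merge_ms M1 M2 (add_mset i M) \<Longrightarrow>
   \<exists>i1 i2 M1' M2'. M1 = add_mset i1 M1' \<and> M2 = add_mset i2 M2' \<and> merge_item i1 i2 i \<and> merge_ms M1' M2' M"
  using merge_ms_split[of M1 M2 "add_mset i M" "{#i#}" M] merge_ms_single_inv by fastforce

lemma merge_item_D_inv: "merge_item i1 i2 (D A X) \<Longrightarrow> \<exists>X1 X2. i1 = D A X1 \<and> i2 = D A X2 \<and> X = X1 |\<union>| X2"
  by (erule merge_itemDE) auto

lemma merge_item_Br_inv: "merge_item i1 i2 (Br M b) \<Longrightarrow> \<exists>M1 M2. i1 = Br M1 b \<and> i2 = Br M2 b \<and> merge_ms M1 M2 M"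
  by (erule merge_itemBrE) auto

lemma merge_item_F_inv: "merge_item i1 i2 (F A) \<Longrightarrow> i1 = F A \<and> i2 = F A"
  by (erule merge_itemFE) auto

lemma merge_fill_inv: "merge_ms M1 M2 (fill C X) \<Longrightarrow>
   \<exists>C1 C2 X1 X2. M1 = fill C1 X1 \<and> M2 = fill C2 X2 \<and> merge_ctx C1 C2 C \<and> merge_ms X1 X2 X"
proof (induction C arbitrary: M1 M2)
  case (Hole M)
  then obtain A1 B1 A2 B2 where "M1 = A1 + B1 \<and> M2 = A2 + B2 \<and> merge_ms A1 A2 M \<and> merge_ms B1 B2 X"
    using merge_ms_split by (metis fill.simps(1))
  then show ?case by (intro exI[of _ "Hole A1"] exI[of _ "Hole A2"]) (auto intro: merge_ctx.intros)
next
  case (CBr M C c)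
  then obtain i1 i2 M1' M2' where a: "M1 = add_mset i1 M1'" "M2 = add_mset i2 M2'" "merge_item i1 i2 (Br (fill C X) c)" "merge_ms M1' M2' M"
    using merge_ms_add_inv by (metis fill.simps(2))
  then obtain N1 N2 where b: "i1 = Br N1 c" "i2 = Br N2 c" "merge_ms N1 N2 (fill C X)" using merge_item_Br_inv by blast
  from CBr.IH[OF b(3)] obtain C1 C2 X1 X2 where "N1 = fill C1 X1 \<and> N2 = fill C2 X2 \<and> merge_ctx C1 C2 C \<and> merge_ms X1 X2 X" by blast
  then show ?case using a b by (intro exI[of _ "CBr M1' C1 c"] exI[of _ "CBr M2' C2 c"]) (auto intro: merge_ctx.intros)
qed

inductive_cases merge_ctx_HoleE: "merge_ctx C1 C2 (Hole M)"
inductive_cases merge_ctx_CBrE: "merge_ctx C1 C2 (CBr M C c)"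

lemma merge_ctx_addtop_inv: "merge_ctx C1 C2 (addtop N H) \<Longrightarrow>
  \<exists>N1 N2 H1 H2. C1 = addtop N1 H1 \<and> C2 = addtop N2 H2 \<and> merge_ms N1 N2 N \<and> merge_ctx H1 H2 H"
proof (cases H)
  case (Hole M)
  assume "merge_ctx C1 C2 (addtop N H)"
  then obtain M1 M2 where "C1 = Hole M1" "C2 = Hole M2" "merge_ms M1 M2 (N + M)" using Hole
    by (auto elim: merge_ctx_HoleE)
  then show ?thesis using Hole merge_ms_split[of M1 M2 "N+M" N M]
    by (metis addtop.simps(1) merge_ctx.intros(1))
next
  case (CBr M C c)
  assume "merge_ctx C1 C2 (addtop N H)"
  then obtain M1 M2 D1 D2 where "C1 = CBr M1 D1 c" "C2 = CBr M2 D2 c" "merge_ms M1 M2 (N + M)" "merge_ctx D1 D2 C" using CBr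
    by (auto elim: merge_ctx_CBrE)
  then show ?thesis using CBr merge_ms_split[of M1 M2 "N+M" N M]
    by (metis addtop.simps(2) merge_ctx.intros(2))
qed

lemma merge_ctx_cmp_inv: "merge_ctx C1 C2 (cmp R H) \<Longrightarrow>
  \<exists>R1 R2 H1 H2. C1 = cmp R1 H1 \<and> C2 = cmp R2 H2 \<and> merge_ctx R1 R2 R \<and> merge_ctx H1 H2 H"
proof (induction R arbitrary: C1 C2)
  case (Hole M)
  then show ?case using merge_ctx_addtop_inv[of C1 C2 M H]
    by (metis cmp.simps(1) merge_ctx.intros(1))
next
  case (CBr M R c)
  then obtain M1 M2 D1 D2 where a: "C1 = CBr M1 D1 c" "C2 = CBr M2 D2 c" "merge_ms M1 M2 M" "merge_ctx D1 D2 (cmp R H)"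
    by (auto elim: merge_ctx_CBrE)
  from CBr.IH[OF a(4)] show ?case using a by (metis cmp.simps(2) merge_ctx.intros(2))
qed

lemma merge_ctx_CBr_inv: "merge_ctx C1 C2 (CBr M C c) \<Longrightarrow>
  \<exists>M1 M2 D1 D2. C1 = CBr M1 D1 c \<and> C2 = CBr M2 D2 c \<and> merge_ms M1 M2 M \<and> merge_ctx D1 D2 C"
  by (auto elim: merge_ctx_CBrE)

lemma merge_ctx_Hole_inv: "merge_ctx C1 C2 (Hole M) \<Longrightarrow>
  \<exists>M1 M2. C1 = Hole M1 \<and> C2 = Hole M2 \<and> merge_ms M1 M2 M"
  by (auto elim: merge_ctx_HoleE)


lemma all_fill:
  assumes "\<And>M b. P (Br M b) = (Q b \<and> (\<forall>i\<in>#M. P i))"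
  shows "(\<forall>i\<in>#fill C X. P i) = ((\<forall>i\<in>#fill C {#}. P i) \<and> (\<forall>i\<in>#X. P i))"
  by (induction C) (auto simp: assms)

lemma wf_Br: "wf_item (Br M b) = (True \<and> (\<forall>i\<in>#M. wf_item i))" by simp
lemma ae_Br: "allempty_item (Br M b) = (True \<and> (\<forall>i\<in>#M. allempty_item i))" by simp
lemma wae_Br: "(wf_item (Br M b) \<and> allempty_item (Br M b)) = (True \<and> (\<forall>i\<in>#M. wf_item i \<and> allempty_item i))" by auto
lemma nb_Br: "(B \<notin> banns (Br M b)) = (B \<noteq> b \<and> (\<forall>i\<in>#M. B \<notin> banns i))" by auto

lemmas wf_fill = all_fill[of wf_item, OF wf_Br]
lemmas ae_fill = all_fill[of allempty_item, OF ae_Br]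
lemmas wae_fill = all_fill[of "\<lambda>i. wf_item i \<and> allempty_item i", OF wae_Br]
lemmas nb_fill = all_fill[of "\<lambda>i. B \<notin> banns i" for B, OF nb_Br]

lemma wf_fill'[simp]: "X \<noteq> {#} \<Longrightarrow> (\<forall>i\<in>#fill C X. wf_item i) = ((\<forall>i\<in>#fill C {#}. wf_item i) \<and> (\<forall>i\<in>#X. wf_item i))"
  by (rule wf_fill)

lemma wae_fill'[simp]: "X \<noteq> {#} \<Longrightarrow> (\<forall>i\<in>#fill C X. wf_item i \<and> allempty_item i) = ((\<forall>i\<in>#fill C {#}. wf_item i \<and> allempty_item i) \<and> (\<forall>i\<in>#X. wf_item i \<and> allempty_item i))"
  by (rule wae_fill)

lemma ae_fill'[simp]: "X \<noteq> {#} \<Longrightarrow> (\<forall>i\<in>#fill C X. allempty_item i) = ((\<forall>i\<in>#fill C {#}. allempty_item i) \<and> (\<forall>i\<in>#X. allempty_item i))"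
  by (rule ae_fill)

lemma nb_fill'[simp]: "X \<noteq> {#} \<Longrightarrow> (\<forall>i\<in>#fill C X. B \<notin> banns i) = ((\<forall>i\<in>#fill C {#}. B \<notin> banns i) \<and> (\<forall>i\<in>#X. B \<notin> banns i))"
  by (rule nb_fill)

lemma wf_erase[simp]: "wf_item (erase i) = wf_item i"
  by (induction i) auto
lemma ae_erase[simp]: "allempty_item (erase i) = True"
  by (induction i) auto
lemma banns_erase[simp]: "banns (erase i) = banns i"
  by (induction i) auto

lemma wf_EE: "(\<forall>i\<in>#M. wf_item i) = (\<forall>i\<in>#EE M. wf_item i)" by simp
lemma nb_EE: "(\<forall>i\<in>#M. B \<notin> banns i) = (\<forall>i\<in>#EE M. B \<notin> banns i)" by simp

lemma wf_fitem[simp]: "wf_item (fitem A X)" by (cases A) auto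
lemma ae_fitem[simp]: "allempty_item (fitem A {||})" by (cases A) auto
lemma banns_fitem[simp]: "banns (fitem A X) = {}" by (cases A) auto

lemma neg_neg[simp]: "neg (neg A) = A" by (induction A) auto

lemma wf_ctx_erase: "erase_ctx C1 = erase_ctx C \<Longrightarrow> (\<forall>i\<in>#fill C1 X. wf_item i) = (\<forall>i\<in>#fill C X. wf_item i)"
  by (metis wf_EE erase_fill)

lemma der_wf: "der Ac S \<Longrightarrow> \<forall>i\<in>#S. wf_item i"
proof (induction rule: der.induct)
  case (ax S C a) then show ?case by blast
next
  case (conj C1 A X C2 B Y C)
  then have "\<forall>i\<in>#fill C1 {#}. wf_item i" by (subst (asm) wf_fill) blast
  then have "\<forall>i\<in>#fill C {#}. wf_item i" using merge_ctx_erase[OF \<open>merge_ctx C1 C2 C\<close>] wf_ctx_erase by metis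
  then show ?case by (subst wf_fill) auto
next
  case (disj C A X B Y)
  then show ?case by (subst wf_fill) (auto simp: wf_fill[of C "{#fitem A X, fitem B Y#}"])
next
  case (box C A \<Sigma> X)
  then show ?case by (subst wf_fill) (auto simp: wf_fill[of C "{#Br {#D (neg A) \<Sigma>, fitem A X#} A#}"])
next
  case (dia G A \<Sigma> Dc X M b)
  then show ?case by auto
next
  case (cut C1 X C2 Y C)
  then have "\<forall>i\<in>#fill C1 {#}. wf_item i" by (subst (asm) wf_fill) blast
  then show ?case using merge_ctx_erase[OF \<open>merge_ctx C1 C2 C\<close>] wf_ctx_erase by metis
qed

lemma merge_fitem: "merge_item (fitem A X) (fitem A Y) (fitem A (X |\<union>| Y))"
  by (cases A) (auto intro: merge_item_merge_ms.intros)

lemma GI: "\<forall>i\<in>#fill K {#}. wf_item i \<and> allempty_item i \<Longrightarrow>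
   \<exists>X Y. der Ac (fill K {#fitem E X, fitem (neg E) Y#})"
proof (induction E arbitrary: K)
  case (At a)
  have "der Ac (fill K {#F (NAt a), F (At a)#})"
    by (rule der.ax[OF refl]) (use At in auto)
  then show ?case by (auto simp: add_mset_commute)
next
  case (NAt a)
  have "der Ac (fill K {#F (NAt a), F (At a)#})"
    by (rule der.ax[OF refl]) (use NAt in auto)
  then show ?case by (auto simp: add_mset_commute)
next
  case (And E1 E2)
  have h1: "\<forall>i\<in>#fill (cmp K (Hole {#fitem (neg E2) {||}#})) {#}. wf_item i \<and> allempty_item i"
    using And.prems by auto
  obtain Xa Ya where a: "der Ac (fill (cmp K (Hole {#fitem (neg E2) {||}#})) {#fitem E1 Xa, fitem (neg E1) Ya#})"
    using And.IH(1)[OF h1] by blast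
  have h2: "\<forall>i\<in>#fill (cmp K (Hole {#fitem (neg E1) {||}#})) {#}. wf_item i \<and> allempty_item i"
    using And.prems by auto
  obtain Xb Yb where b: "der Ac (fill (cmp K (Hole {#fitem (neg E1) {||}#})) {#fitem E2 Xb, fitem (neg E2) Yb#})"
    using And.IH(2)[OF h2] by blast
  have m: "merge_ctx (cmp K (Hole {#fitem (neg E1) Ya, fitem (neg E2) {||}#}))
                     (cmp K (Hole {#fitem (neg E1) {||}, fitem (neg E2) Yb#}))
                     (cmp K (Hole {#fitem (neg E1) Ya, fitem (neg E2) Yb#}))"
    using merge_ctx_cmp[OF merge_ctx_refl merge_ctx.intros(1)[OF merge_ms_add[OF merge_fitem merge_ms_single[OF merge_fitem]]]]
    by (metis funion_fempty_left funion_fempty_right)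
  have "der Ac (fill (cmp K (Hole {#fitem (neg E1) Ya, fitem (neg E2) Yb#})) {#F (And E1 E2)#})"
    by (rule der.conj[OF _ _ m, where A=E1 and X=Xa and B=E2 and Y=Xb]) (use a b in \<open>auto simp: add_mset_commute\<close>)
  then have "der Ac (fill (cmp K (Hole {#F (And E1 E2)#})) {#fitem (neg E1) Ya, fitem (neg E2) Yb#})"
    by (auto simp: add_mset_commute)
  from der.disj[OF this] show ?case by (auto simp: add_mset_commute intro!: exI[of _ "{||}"])
next
  case (Or E1 E2)
  have h1: "\<forall>i\<in>#fill (cmp K (Hole {#fitem E2 {||}#})) {#}. wf_item i \<and> allempty_item i"
    using Or.prems by auto
  obtain Xa Ya where a: "der Ac (fill (cmp K (Hole {#fitem E2 {||}#})) {#fitem E1 Xa, fitem (neg E1) Ya#})"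
    using Or.IH(1)[OF h1] by blast
  have h2: "\<forall>i\<in>#fill (cmp K (Hole {#fitem E1 {||}#})) {#}. wf_item i \<and> allempty_item i"
    using Or.prems by auto
  obtain Xb Yb where b: "der Ac (fill (cmp K (Hole {#fitem E1 {||}#})) {#fitem E2 Xb, fitem (neg E2) Yb#})"
    using Or.IH(2)[OF h2] by blast
  have m: "merge_ctx (cmp K (Hole {#fitem E1 Xa, fitem E2 {||}#}))
                     (cmp K (Hole {#fitem E1 {||}, fitem E2 Xb#}))
                     (cmp K (Hole {#fitem E1 Xa, fitem E2 Xb#}))"
    using merge_ctx_cmp[OF merge_ctx_refl merge_ctx.intros(1)[OF merge_ms_add[OF merge_fitem merge_ms_single[OF merge_fitem]]]]
    by (metis funion_fempty_left funion_fempty_right)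
  have "der Ac (fill (cmp K (Hole {#fitem E1 Xa, fitem E2 Xb#})) {#F (And (neg E1) (neg E2))#})"
    by (rule der.conj[OF _ _ m, where A="neg E1" and X=Ya and B="neg E2" and Y=Yb]) (use a b in \<open>auto simp: add_mset_commute\<close>)
  then have "der Ac (fill (cmp K (Hole {#F (And (neg E1) (neg E2))#})) {#fitem E1 Xa, fitem E2 Xb#})"
    by (auto simp: add_mset_commute)
  from der.disj[OF this] show ?case by (auto simp: add_mset_commute intro!: exI[of _ "{||}"])
next
  case (Box E)
  let ?K2 = "cmp K (CBr {#D (neg E) {||}#} (Hole {#D (neg E) {||}#}) E)"
  have h: "\<forall>i\<in>#fill ?K2 {#}. wf_item i \<and> allempty_item i"
    using Box.prems by auto
  obtain Xa Ya where a: "der Ac (fill ?K2 {#fitem E Xa, fitem (neg E) Ya#})"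
    using Box.IH[OF h] by blast
  have "der Ac (fill K (add_mset (D (neg E) {||}) (fill (Hole {#}) {#Br (add_mset (fitem (neg E) Ya) {#D (neg E) {||}, fitem E Xa#}) E#})))"
    using a by (simp add: add_mset_commute)
  from der.dia[OF this]
  have "der Ac (fill (cmp K (Hole {#D (neg E) {|E|}#})) {#Br {#D (neg E) {||}, fitem E Xa#} E#})"
    by (simp add: add_mset_commute)
  from der.box[OF this] show ?case by (auto simp: add_mset_commute)
next
  case (Dia E)
  let ?K2 = "cmp K (CBr {#D E {||}#} (Hole {#D E {||}#}) (neg E))"
  have h: "\<forall>i\<in>#fill ?K2 {#}. wf_item i \<and> allempty_item i"
    using Dia.prems by auto
  obtain Xa Ya where a: "der Ac (fill ?K2 {#fitem E Xa, fitem (neg E) Ya#})"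
    using Dia.IH[OF h] by blast
  have "der Ac (fill K (add_mset (D E {||}) (fill (Hole {#}) {#Br (add_mset (fitem E Xa) {#D (neg (neg E)) {||}, fitem (neg E) Ya#}) (neg E)#})))"
    using a by (simp add: add_mset_commute)
  from der.dia[OF this]
  have "der Ac (fill (cmp K (Hole {#D E {|neg E|}#})) {#Br {#D (neg (neg E)) {||}, fitem (neg E) Ya#} (neg E)#})"
    by (simp add: add_mset_commute)
  from der.box[OF this] have "der Ac (fill K {#F (Box (neg E)), D E {|neg E|}#})" by (simp add: add_mset_commute)
  then show ?case by (intro exI[of _ "{|neg E|}"]) (simp add: add_mset_commute)
qed


definition noB :: "fm \<Rightarrow> seq \<Rightarrow> bool" where "noB B \<Delta> \<equiv> \<forall>i\<in>#\<Delta>. B \<notin> banns i"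

definition goal :: "fm \<Rightarrow> fm \<Rightarrow> fm \<Rightarrow> fm \<Rightarrow> ctx \<Rightarrow> fm fset \<Rightarrow> seq \<Rightarrow> bool" where
  "goal Ac E B b G \<Sigma> \<Delta> \<equiv> \<exists>G' \<Delta>' \<Sigma>' X. erase_ctx G' = erase_ctx G \<and> EE \<Delta>' = EE \<Delta> \<and>
     \<Sigma>' |\<subseteq>| \<Sigma> |-| {|B|} \<and> der Ac (fill G' {#Br ({#D E \<Sigma>', D (neg B) X#} + \<Delta>') b#})"

fun isBr :: "item \<Rightarrow> bool" where "isBr (Br _ _) = True" | "isBr _ = False"

lemma mem_top: "D E \<Sigma> \<in># fill Q X \<Longrightarrow> D E \<Sigma> \<notin># X \<Longrightarrow> \<exists>Q'. Q = addtop {#D E \<Sigma>#} Q'"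
proof (cases Q)
  case (Hole N)
  assume "D E \<Sigma> \<in># fill Q X" "D E \<Sigma> \<notin># X"
  then have "D E \<Sigma> \<in># N" using Hole by auto
  then obtain N' where "N = add_mset (D E \<Sigma>) N'" by (metis multi_member_split)
  then have "Q = addtop {#D E \<Sigma>#} (Hole N')" using Hole by simp
  then show ?thesis ..
next
  case (CBr N C c)
  assume "D E \<Sigma> \<in># fill Q X"
  then have "D E \<Sigma> \<in># N" using CBr by auto
  then obtain N' where "N = add_mset (D E \<Sigma>) N'" by (metis multi_member_split)
  then have "Q = addtop {#D E \<Sigma>#} (CBr N' C c)" using CBr by simp
  then show ?thesis ..
qed

lemma hasBr: "\<exists>i\<in># fill Q {#Br Z b#}. isBr i"
  by (cases Q) auto
lemma noB_fill: "noB B (fill Q X) = (noB B (fill Q {#}) \<and> noB B X)"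
  unfolding noB_def by (rule nb_fill)

lemma noB_EE: "EE X = EE Y \<Longrightarrow> noB B X = noB B Y"
  by (simp only: noB_def nb_EE[where M=X] nb_EE[where M=Y])

lemma goalI: "erase_ctx G' = erase_ctx G \<Longrightarrow> EE \<Delta>' = EE \<Delta> \<Longrightarrow> \<Sigma>' |\<subseteq>| \<Sigma> |-| {|B|} \<Longrightarrow>
   der Ac (fill G' {#Br ({#D E \<Sigma>', D (neg B) X#} + \<Delta>') b#}) \<Longrightarrow> goal Ac E B b G \<Sigma> \<Delta>"
  unfolding goal_def by blast

lemma step1:
  assumes IH: "\<And>G \<Sigma> \<Delta>. fill C X1 = fill G {#Br (add_mset (D E \<Sigma>) \<Delta>) b#} \<Longrightarrow> noB B \<Delta> \<Longrightarrow> goal Ac E B b G \<Sigma> \<Delta>"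
  and rl: "\<And>X1'. EE X1' = EE X1 \<Longrightarrow> \<exists>X'. EE X' = EE X \<and> (\<forall>C. der Ac (fill C X1') \<longrightarrow> der Ac (fill C X'))"
  and nobr: "\<forall>i\<in>#X. \<not> isBr i" and nod: "D E \<Sigma> \<notin># X"
  and nb1: "noB B X1"
  and eq: "fill C X = fill G {#Br (add_mset (D E \<Sigma>) \<Delta>) b#}"
  and nb: "noB B \<Delta>"
  shows "goal Ac E B b G \<Sigma> \<Delta>"
  using dec[OF eq]
proof (elim disjE exE conjE)
  fix Q Z b' assume y: "Br (add_mset (D E \<Sigma>) \<Delta>) b = Br Z b'" and C: "C = cmp G (CBr {#} Q b')" and Z: "Z = fill Q X"
  then have "b' = b" "add_mset (D E \<Sigma>) \<Delta> = fill Q X" by auto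
  then have m: "D E \<Sigma> \<in># fill Q X" by (metis union_single_eq_member)
  obtain Q' where Q: "Q = addtop {#D E \<Sigma>#} Q'" using mem_top[OF m nod] by blast
  then have \<Delta>: "\<Delta> = fill Q' X" using \<open>add_mset (D E \<Sigma>) \<Delta> = fill Q X\<close> by simp
  have e1: "fill C X1 = fill G {#Br (add_mset (D E \<Sigma>) (fill Q' X1)) b#}" using C Q \<open>b' = b\<close> by simp
  have e2: "noB B (fill Q' X1)" using noB_fill[of B Q' X] noB_fill[of B Q' X1] nb nb1 \<Delta> by simp
  have "goal Ac E B b G \<Sigma> (fill Q' X1)" by (rule IH[OF e1 e2])
  then obtain G' \<Delta>1 \<Sigma>' Y where g: "erase_ctx G' = erase_ctx G" "EE \<Delta>1 = EE (fill Q' X1)" "\<Sigma>' |\<subseteq>| \<Sigma> |-| {|B|}"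
     "der Ac (fill G' {#Br ({#D E \<Sigma>', D (neg B) Y#} + \<Delta>1) b#})"
    unfolding goal_def by blast
  obtain Q'' X1' where l: "\<Delta>1 = fill Q'' X1'" "erase_ctx Q'' = erase_ctx Q'" "EE X1' = EE X1"
    using lift_fill[OF g(2)] by blast
  obtain X' where X': "EE X' = EE X" "\<And>C. der Ac (fill C X1') \<Longrightarrow> der Ac (fill C X')"
    using rl[OF l(3)] by blast
  have "der Ac (fill (cmp G' (CBr {#} (addtop {#D E \<Sigma>', D (neg B) Y#} Q'') b)) X1')"
    using g(4) l(1) by simp
  then have "der Ac (fill (cmp G' (CBr {#} (addtop {#D E \<Sigma>', D (neg B) Y#} Q'') b)) X')" by (rule X'(2))
  then have d: "der Ac (fill G' {#Br ({#D E \<Sigma>', D (neg B) Y#} + fill Q'' X') b#})" by simp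
  have e: "EE (fill Q'' X') = EE \<Delta>" using \<Delta> l(2) X'(1) by simp
  show ?thesis by (rule goalI[OF g(1) e g(3) d])
next
  fix Q assume "X = fill Q {#Br (add_mset (D E \<Sigma>) \<Delta>) b#}"
  then show ?thesis using hasBr[of Q "add_mset (D E \<Sigma>) \<Delta>" b] nobr by auto
next
  fix R M Cb Gb
  assume C: "C = cmp R (addtop (M + fill Gb {#Br (add_mset (D E \<Sigma>) \<Delta>) b#}) Cb)"
     and G: "G = cmp R (addtop (M + fill Cb X) Gb)"
  let ?G1 = "cmp R (addtop (M + fill Cb X1) Gb)"
  have e1: "fill C X1 = fill ?G1 {#Br (add_mset (D E \<Sigma>) \<Delta>) b#}" using C by (simp add: ac_simps)
  have "goal Ac E B b ?G1 \<Sigma> \<Delta>" by (rule IH[OF e1 nb])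
  then obtain G1' \<Delta>' \<Sigma>' Y where g: "erase_ctx G1' = erase_ctx ?G1" "EE \<Delta>' = EE \<Delta>" "\<Sigma>' |\<subseteq>| \<Sigma> |-| {|B|}"
     "der Ac (fill G1' {#Br ({#D E \<Sigma>', D (neg B) Y#} + \<Delta>') b#})"
    unfolding goal_def by blast
  obtain R' H' where l1: "G1' = cmp R' H'" "erase_ctx R' = erase_ctx R" "erase_ctx H' = erase_ctx (addtop (M + fill Cb X1) Gb)"
    using lift_cmp[OF g(1)] by blast
  obtain N' Gb' where l2: "H' = addtop N' Gb'" "EE N' = EE (M + fill Cb X1)" "erase_ctx Gb' = erase_ctx Gb"
    using lift_addtop[OF l1(3)] by blast
  obtain M' W where l3: "N' = M' + W" "EE M' = EE M" "EE W = EE (fill Cb X1)"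
    using lift_plus[of N' "EE M" "EE (fill Cb X1)"] l2(2) by auto
  obtain Cb' X1' where l4: "W = fill Cb' X1'" "erase_ctx Cb' = erase_ctx Cb" "EE X1' = EE X1"
    using lift_fill[OF l3(3)] by blast
  obtain X' where X': "EE X' = EE X" "\<And>C. der Ac (fill C X1') \<Longrightarrow> der Ac (fill C X')"
    using rl[OF l4(3)] by blast
  let ?y = "Br ({#D E \<Sigma>', D (neg B) Y#} + \<Delta>') b"
  have "der Ac (fill (cmp R' (addtop (M' + fill Gb' {#?y#}) Cb')) X1')"
    using g(4) l1(1) l2(1) l3(1) l4(1) by (simp add: ac_simps)
  then have "der Ac (fill (cmp R' (addtop (M' + fill Gb' {#?y#}) Cb')) X')" by (rule X'(2))
  then have d: "der Ac (fill (cmp R' (addtop (M' + fill Cb' X') Gb')) {#?y#})" by (simp add: ac_simps)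
  have e: "erase_ctx (cmp R' (addtop (M' + fill Cb' X') Gb')) = erase_ctx G"
    using G l1(2) l2(3) l3(2) l4(2) X'(1) by simp
  show ?thesis by (rule goalI[OF e g(2) g(3) d])
qed


lemma merge_caseA:
  assumes "merge_ctx C1 C2 (cmp G (CBr {#} (addtop {#D E \<Sigma>#} Q') b))"
  shows "\<exists>G1 G2 Q1 Q2 \<Sigma>1 \<Sigma>2. C1 = cmp G1 (CBr {#} (addtop {#D E \<Sigma>1#} Q1) b) \<and>
     C2 = cmp G2 (CBr {#} (addtop {#D E \<Sigma>2#} Q2) b) \<and> merge_ctx G1 G2 G \<and> merge_ctx Q1 Q2 Q' \<and> \<Sigma> = \<Sigma>1 |\<union>| \<Sigma>2"
proof -
  obtain G1 G2 H1 H2 where a: "C1 = cmp G1 H1" "C2 = cmp G2 H2" "merge_ctx G1 G2 G" "merge_ctx H1 H2 (CBr {#} (addtop {#D E \<Sigma>#} Q') b)"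
    using merge_ctx_cmp_inv[OF assms] by blast
  obtain K1 K2 P1 P2 where b: "H1 = CBr K1 P1 b" "H2 = CBr K2 P2 b" "merge_ms K1 K2 {#}" "merge_ctx P1 P2 (addtop {#D E \<Sigma>#} Q')"
    using merge_ctx_CBr_inv[OF a(4)] by blast
  have K: "K1 = {#}" "K2 = {#}" using merge_ms_empty[OF b(3)] by auto
  obtain N1 N2 Q1 Q2 where c: "P1 = addtop N1 Q1" "P2 = addtop N2 Q2" "merge_ms N1 N2 {#D E \<Sigma>#}" "merge_ctx Q1 Q2 Q'"
    using merge_ctx_addtop_inv[OF b(4)] by blast
  obtain n1 n2 where d: "N1 = {#n1#}" "N2 = {#n2#}" "merge_item n1 n2 (D E \<Sigma>)"
    using merge_ms_single_inv[OF c(3)] by blast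
  obtain S1 S2 where e: "n1 = D E S1" "n2 = D E S2" "\<Sigma> = S1 |\<union>| S2"
    using merge_item_D_inv[OF d(3)] by blast
  show ?thesis using a b c d e K by blast
qed

lemma merge_caseC:
  assumes "merge_ctx C1 C2 (cmp R (addtop (M + fill Gb {#Br (add_mset (D E \<Sigma>) \<Delta>) b#}) Cb))"
  shows "\<exists>R1 R2 M1 M2 Gb1 Gb2 \<Sigma>1 \<Sigma>2 \<Delta>1 \<Delta>2 Cb1 Cb2.
     C1 = cmp R1 (addtop (M1 + fill Gb1 {#Br (add_mset (D E \<Sigma>1) \<Delta>1) b#}) Cb1) \<and>
     C2 = cmp R2 (addtop (M2 + fill Gb2 {#Br (add_mset (D E \<Sigma>2) \<Delta>2) b#}) Cb2) \<and>
     merge_ctx R1 R2 R \<and> merge_ms M1 M2 M \<and> merge_ctx Gb1 Gb2 Gb \<and> merge_ms \<Delta>1 \<Delta>2 \<Delta> \<and>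
     merge_ctx Cb1 Cb2 Cb \<and> \<Sigma> = \<Sigma>1 |\<union>| \<Sigma>2"
proof -
  obtain R1 R2 H1 H2 where a: "C1 = cmp R1 H1" "C2 = cmp R2 H2" "merge_ctx R1 R2 R"
      "merge_ctx H1 H2 (addtop (M + fill Gb {#Br (add_mset (D E \<Sigma>) \<Delta>) b#}) Cb)"
    using merge_ctx_cmp_inv[OF assms] by blast
  obtain N1 N2 Cb1 Cb2 where b: "H1 = addtop N1 Cb1" "H2 = addtop N2 Cb2"
      "merge_ms N1 N2 (M + fill Gb {#Br (add_mset (D E \<Sigma>) \<Delta>) b#})" "merge_ctx Cb1 Cb2 Cb"
    using merge_ctx_addtop_inv[OF a(4)] by blast
  obtain M1 W1 M2 W2 where c: "N1 = M1 + W1" "N2 = M2 + W2" "merge_ms M1 M2 M" "merge_ms W1 W2 (fill Gb {#Br (add_mset (D E \<Sigma>) \<Delta>) b#})"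
    using merge_ms_split[OF b(3) refl] by blast
  obtain Gb1 Gb2 Y1 Y2 where d: "W1 = fill Gb1 Y1" "W2 = fill Gb2 Y2" "merge_ctx Gb1 Gb2 Gb" "merge_ms Y1 Y2 {#Br (add_mset (D E \<Sigma>) \<Delta>) b#}"
    using merge_fill_inv[OF c(4)] by blast
  obtain y1 y2 where e: "Y1 = {#y1#}" "Y2 = {#y2#}" "merge_item y1 y2 (Br (add_mset (D E \<Sigma>) \<Delta>) b)"
    using merge_ms_single_inv[OF d(4)] by blast
  obtain Z1 Z2 where f: "y1 = Br Z1 b" "y2 = Br Z2 b" "merge_ms Z1 Z2 (add_mset (D E \<Sigma>) \<Delta>)"
    using merge_item_Br_inv[OF e(3)] by blast
  obtain z1 z2 \<Delta>1 \<Delta>2 where g: "Z1 = add_mset z1 \<Delta>1" "Z2 = add_mset z2 \<Delta>2" "merge_item z1 z2 (D E \<Sigma>)" "merge_ms \<Delta>1 \<Delta>2 \<Delta>"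
    using merge_ms_add_inv[OF f(3)] by blast
  obtain S1 S2 where h: "z1 = D E S1" "z2 = D E S2" "\<Sigma> = S1 |\<union>| S2"
    using merge_item_D_inv[OF g(3)] by blast
  show ?thesis
    apply (rule exI[of _ R1], rule exI[of _ R2], rule exI[of _ M1], rule exI[of _ M2], rule exI[of _ Gb1], rule exI[of _ Gb2])
    apply (rule exI[of _ S1], rule exI[of _ S2], rule exI[of _ \<Delta>1], rule exI[of _ \<Delta>2], rule exI[of _ Cb1], rule exI[of _ Cb2])
    using a b c d e f g h by simp
qed

lemma build_A:
  assumes "merge_ctx G1 G2 G" "merge_ctx Q1 Q2 Q"
  shows "merge_ctx (cmp G1 (CBr {#} (addtop {#D E S1, D Fb T1#} Q1) b)) (cmp G2 (CBr {#} (addtop {#D E S2, D Fb T2#} Q2) b))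
      (cmp G (CBr {#} (addtop {#D E (S1 |\<union>| S2), D Fb (T1 |\<union>| T2)#} Q) b))"
proof -
  have "merge_ms {#D E S1, D Fb T1#} {#D E S2, D Fb T2#} {#D E (S1 |\<union>| S2), D Fb (T1 |\<union>| T2)#}"
    by (intro merge_ms_add merge_ms_single merge_item_merge_ms.intros)
  then show ?thesis
    by (intro merge_ctx_cmp assms merge_ctx.intros merge_ctx_addtop merge_item_merge_ms.intros)
qed

lemma build_C:
  assumes "merge_ctx R1 R2 R" "merge_ms M1 M2 M" "merge_ctx Gb1 Gb2 Gb" "merge_ms \<Delta>1 \<Delta>2 \<Delta>" "merge_ctx Cb1 Cb2 Cb"
  shows "merge_ctx (cmp R1 (addtop (M1 + fill Gb1 {#Br ({#D E S1, D Fb T1#} + \<Delta>1) b#}) Cb1))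
                   (cmp R2 (addtop (M2 + fill Gb2 {#Br ({#D E S2, D Fb T2#} + \<Delta>2) b#}) Cb2))
                   (cmp R (addtop (M + fill Gb {#Br ({#D E (S1 |\<union>| S2), D Fb (T1 |\<union>| T2)#} + \<Delta>) b#}) Cb))"
proof -
  have "merge_ms {#D E S1, D Fb T1#} {#D E S2, D Fb T2#} {#D E (S1 |\<union>| S2), D Fb (T1 |\<union>| T2)#}"
    by (intro merge_ms_add merge_ms_single merge_item_merge_ms.intros)
  then have "merge_ms ({#D E S1, D Fb T1#} + \<Delta>1) ({#D E S2, D Fb T2#} + \<Delta>2) ({#D E (S1 |\<union>| S2), D Fb (T1 |\<union>| T2)#} + \<Delta>)"
    using assms(4) by (rule merge_ms_plus)
  then have "merge_ms {#Br ({#D E S1, D Fb T1#} + \<Delta>1) b#} {#Br ({#D E S2, D Fb T2#} + \<Delta>2) b#} {#Br ({#D E (S1 |\<union>| S2), D Fb (T1 |\<union>| T2)#} + \<Delta>) b#}"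
    by (intro merge_ms_single merge_item_merge_ms.intros)
  then show ?thesis
    by (intro merge_ctx_cmp assms merge_ctx_addtop merge_ms_plus merge_fill)
qed

lemma step2:
  assumes IH1: "\<And>G \<Sigma> \<Delta>. fill C1 X1 = fill G {#Br (add_mset (D E \<Sigma>) \<Delta>) b#} \<Longrightarrow> noB B \<Delta> \<Longrightarrow> goal Ac E B b G \<Sigma> \<Delta>"
  and IH2: "\<And>G \<Sigma> \<Delta>. fill C2 X2 = fill G {#Br (add_mset (D E \<Sigma>) \<Delta>) b#} \<Longrightarrow> noB B \<Delta> \<Longrightarrow> goal Ac E B b G \<Sigma> \<Delta>"
  and rl: "\<And>X1' X2'. EE X1' = EE X1 \<Longrightarrow> EE X2' = EE X2 \<Longrightarrow> \<exists>X'. EE X' = EE X \<and>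
      (\<forall>C1 C2 C. der Ac (fill C1 X1') \<longrightarrow> der Ac (fill C2 X2') \<longrightarrow> merge_ctx C1 C2 C \<longrightarrow> der Ac (fill C X'))"
  and m: "merge_ctx C1 C2 C"
  and nobr: "\<forall>i\<in>#X. \<not> isBr i" and nod: "D E \<Sigma> \<notin># X"
  and nb1: "noB B X1" and nb2: "noB B X2"
  and eq: "fill C X = fill G {#Br (add_mset (D E \<Sigma>) \<Delta>) b#}"
  and nb: "noB B \<Delta>"
  shows "goal Ac E B b G \<Sigma> \<Delta>"
  using dec[OF eq]
proof (elim disjE exE conjE)
  fix Q Z b' assume y: "Br (add_mset (D E \<Sigma>) \<Delta>) b = Br Z b'" and C: "C = cmp G (CBr {#} Q b')" and Z: "Z = fill Q X"
  then have "b' = b" "add_mset (D E \<Sigma>) \<Delta> = fill Q X" by auto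
  then have mm: "D E \<Sigma> \<in># fill Q X" by (metis union_single_eq_member)
  obtain Q' where Q: "Q = addtop {#D E \<Sigma>#} Q'" using mem_top[OF mm nod] by blast
  then have \<Delta>: "\<Delta> = fill Q' X" using \<open>add_mset (D E \<Sigma>) \<Delta> = fill Q X\<close> by simp
  have "merge_ctx C1 C2 (cmp G (CBr {#} (addtop {#D E \<Sigma>#} Q') b))" using m C Q \<open>b' = b\<close> by simp
  then obtain G1 G2 Q1 Q2 \<Sigma>1 \<Sigma>2 where mc: "C1 = cmp G1 (CBr {#} (addtop {#D E \<Sigma>1#} Q1) b)"
     "C2 = cmp G2 (CBr {#} (addtop {#D E \<Sigma>2#} Q2) b)" "merge_ctx G1 G2 G" "merge_ctx Q1 Q2 Q'" "\<Sigma> = \<Sigma>1 |\<union>| \<Sigma>2"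
    using merge_caseA by blast
  have eQ: "erase_ctx Q1 = erase_ctx Q'" "erase_ctx Q2 = erase_ctx Q'" "erase_ctx G1 = erase_ctx G" "erase_ctx G2 = erase_ctx G"
    using merge_ctx_erase[OF mc(4)] merge_ctx_erase[OF mc(3)] by auto
  have nbQ: "noB B (fill Q' {#})" using noB_fill[of B Q' X] nb \<Delta> by simp
  have nbQ1: "noB B (fill Q1 X1)"
    using noB_fill[of B Q1 X1] noB_EE[of "fill Q1 {#}" "fill Q' {#}" B] eQ(1) nbQ nb1 by simp
  have nbQ2: "noB B (fill Q2 X2)"
    using noB_fill[of B Q2 X2] noB_EE[of "fill Q2 {#}" "fill Q' {#}" B] eQ(2) nbQ nb2 by simp
  have e1: "fill C1 X1 = fill G1 {#Br (add_mset (D E \<Sigma>1) (fill Q1 X1)) b#}" using mc(1) by simp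
  have "goal Ac E B b G1 \<Sigma>1 (fill Q1 X1)" by (rule IH1[OF e1 nbQ1])
  then obtain G1' \<Delta>1 \<Sigma>1' Y1 where g1: "erase_ctx G1' = erase_ctx G1" "EE \<Delta>1 = EE (fill Q1 X1)" "\<Sigma>1' |\<subseteq>| \<Sigma>1 |-| {|B|}"
     "der Ac (fill G1' {#Br ({#D E \<Sigma>1', D (neg B) Y1#} + \<Delta>1) b#})"
    unfolding goal_def by blast
  have e2: "fill C2 X2 = fill G2 {#Br (add_mset (D E \<Sigma>2) (fill Q2 X2)) b#}" using mc(2) by simp
  have "goal Ac E B b G2 \<Sigma>2 (fill Q2 X2)" by (rule IH2[OF e2 nbQ2])
  then obtain G2' \<Delta>2 \<Sigma>2' Y2 where g2: "erase_ctx G2' = erase_ctx G2" "EE \<Delta>2 = EE (fill Q2 X2)" "\<Sigma>2' |\<subseteq>| \<Sigma>2 |-| {|B|}"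
     "der Ac (fill G2' {#Br ({#D E \<Sigma>2', D (neg B) Y2#} + \<Delta>2) b#})"
    unfolding goal_def by blast
  obtain Q1'' X1' where l1: "\<Delta>1 = fill Q1'' X1'" "erase_ctx Q1'' = erase_ctx Q1" "EE X1' = EE X1"
    using lift_fill[OF g1(2)] by blast
  obtain Q2'' X2' where l2: "\<Delta>2 = fill Q2'' X2'" "erase_ctx Q2'' = erase_ctx Q2" "EE X2' = EE X2"
    using lift_fill[OF g2(2)] by blast
  obtain X' where X': "EE X' = EE X" "\<And>C1 C2 C. der Ac (fill C1 X1') \<Longrightarrow> der Ac (fill C2 X2') \<Longrightarrow> merge_ctx C1 C2 C \<Longrightarrow> der Ac (fill C X')"
    using rl[OF l1(3) l2(3)] by blast
  obtain G'' where mG: "merge_ctx G1' G2' G''" using merge_ctx_exists g1(1) g2(1) eQ by metis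
  obtain Q'' where mQ: "merge_ctx Q1'' Q2'' Q''" using merge_ctx_exists l1(2) l2(2) eQ by metis
  have d1: "der Ac (fill (cmp G1' (CBr {#} (addtop {#D E \<Sigma>1', D (neg B) Y1#} Q1'') b)) X1')" using g1(4) l1(1) by simp
  have d2: "der Ac (fill (cmp G2' (CBr {#} (addtop {#D E \<Sigma>2', D (neg B) Y2#} Q2'') b)) X2')" using g2(4) l2(1) by simp
  have "der Ac (fill (cmp G'' (CBr {#} (addtop {#D E (\<Sigma>1' |\<union>| \<Sigma>2'), D (neg B) (Y1 |\<union>| Y2)#} Q'') b)) X')"
    by (rule X'(2)[OF d1 d2 build_A[OF mG mQ]])
  then have d: "der Ac (fill G'' {#Br ({#D E (\<Sigma>1' |\<union>| \<Sigma>2'), D (neg B) (Y1 |\<union>| Y2)#} + fill Q'' X') b#})" by simp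
  have eG: "erase_ctx G'' = erase_ctx G" using merge_ctx_erase[OF mG] g1(1) eQ by simp
  have eD: "EE (fill Q'' X') = EE \<Delta>" using merge_ctx_erase[OF mQ] l1(2) eQ X'(1) \<Delta> by simp
  have sS: "\<Sigma>1' |\<union>| \<Sigma>2' |\<subseteq>| \<Sigma> |-| {|B|}" using g1(3) g2(3) mc(5) by auto
  show ?thesis by (rule goalI[OF eG eD sS d])
next
  fix Q assume "X = fill Q {#Br (add_mset (D E \<Sigma>) \<Delta>) b#}"
  then show ?thesis using hasBr[of Q "add_mset (D E \<Sigma>) \<Delta>" b] nobr by auto
next
  fix R M Cb Gb
  assume C: "C = cmp R (addtop (M + fill Gb {#Br (add_mset (D E \<Sigma>) \<Delta>) b#}) Cb)"
     and G: "G = cmp R (addtop (M + fill Cb X) Gb)"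
  obtain R1 R2 M1 M2 Gb1 Gb2 \<Sigma>1 \<Sigma>2 \<Delta>1 \<Delta>2 Cb1 Cb2 where mc:
     "C1 = cmp R1 (addtop (M1 + fill Gb1 {#Br (add_mset (D E \<Sigma>1) \<Delta>1) b#}) Cb1)"
     "C2 = cmp R2 (addtop (M2 + fill Gb2 {#Br (add_mset (D E \<Sigma>2) \<Delta>2) b#}) Cb2)"
     "merge_ctx R1 R2 R" "merge_ms M1 M2 M" "merge_ctx Gb1 Gb2 Gb" "merge_ms \<Delta>1 \<Delta>2 \<Delta>"
     "merge_ctx Cb1 Cb2 Cb" "\<Sigma> = \<Sigma>1 |\<union>| \<Sigma>2"
    using merge_caseC[of C1 C2 R M Gb E \<Sigma> \<Delta> b Cb] m C by blast
  have eR: "erase_ctx R1 = erase_ctx R" "erase_ctx R2 = erase_ctx R" using merge_ctx_erase[OF mc(3)] by auto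
  have eM: "EE M1 = EE M" "EE M2 = EE M" using merge_ms_erase[OF mc(4)] by auto
  have eGb: "erase_ctx Gb1 = erase_ctx Gb" "erase_ctx Gb2 = erase_ctx Gb" using merge_ctx_erase[OF mc(5)] by auto
  have eDl: "EE \<Delta>1 = EE \<Delta>" "EE \<Delta>2 = EE \<Delta>" using merge_ms_erase[OF mc(6)] by auto
  have eCb: "erase_ctx Cb1 = erase_ctx Cb" "erase_ctx Cb2 = erase_ctx Cb" using merge_ctx_erase[OF mc(7)] by auto
  have nbD1: "noB B \<Delta>1" using noB_EE[OF eDl(1)] nb by simp
  have nbD2: "noB B \<Delta>2" using noB_EE[OF eDl(2)] nb by simp
  let ?G1 = "cmp R1 (addtop (M1 + fill Cb1 X1) Gb1)"
  have e1: "fill C1 X1 = fill ?G1 {#Br (add_mset (D E \<Sigma>1) \<Delta>1) b#}" using mc(1) by (simp add: ac_simps)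
  have "goal Ac E B b ?G1 \<Sigma>1 \<Delta>1" by (rule IH1[OF e1 nbD1])
  then obtain G1' \<Delta>1' \<Sigma>1' Y1 where g1: "erase_ctx G1' = erase_ctx ?G1" "EE \<Delta>1' = EE \<Delta>1" "\<Sigma>1' |\<subseteq>| \<Sigma>1 |-| {|B|}"
     "der Ac (fill G1' {#Br ({#D E \<Sigma>1', D (neg B) Y1#} + \<Delta>1') b#})"
    unfolding goal_def by blast
  obtain R1' H1' where l11: "G1' = cmp R1' H1'" "erase_ctx R1' = erase_ctx R1" "erase_ctx H1' = erase_ctx (addtop (M1 + fill Cb1 X1) Gb1)"
    using lift_cmp[OF g1(1)] by blast
  obtain N1' Gb1' where l12: "H1' = addtop N1' Gb1'" "EE N1' = EE (M1 + fill Cb1 X1)" "erase_ctx Gb1' = erase_ctx Gb1"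
    using lift_addtop[OF l11(3)] by blast
  obtain M1' W1 where l13: "N1' = M1' + W1" "EE M1' = EE M1" "EE W1 = EE (fill Cb1 X1)"
    using lift_plus[of N1' "EE M1" "EE (fill Cb1 X1)"] l12(2) by auto
  obtain Cb1' X1' where l14: "W1 = fill Cb1' X1'" "erase_ctx Cb1' = erase_ctx Cb1" "EE X1' = EE X1"
    using lift_fill[OF l13(3)] by blast
  let ?G2 = "cmp R2 (addtop (M2 + fill Cb2 X2) Gb2)"
  have e2: "fill C2 X2 = fill ?G2 {#Br (add_mset (D E \<Sigma>2) \<Delta>2) b#}" using mc(2) by (simp add: ac_simps)
  have "goal Ac E B b ?G2 \<Sigma>2 \<Delta>2" by (rule IH2[OF e2 nbD2])
  then obtain G2' \<Delta>2' \<Sigma>2' Y2 where g2: "erase_ctx G2' = erase_ctx ?G2" "EE \<Delta>2' = EE \<Delta>2" "\<Sigma>2' |\<subseteq>| \<Sigma>2 |-| {|B|}"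
     "der Ac (fill G2' {#Br ({#D E \<Sigma>2', D (neg B) Y2#} + \<Delta>2') b#})"
    unfolding goal_def by blast
  obtain R2' H2' where l21: "G2' = cmp R2' H2'" "erase_ctx R2' = erase_ctx R2" "erase_ctx H2' = erase_ctx (addtop (M2 + fill Cb2 X2) Gb2)"
    using lift_cmp[OF g2(1)] by blast
  obtain N2' Gb2' where l22: "H2' = addtop N2' Gb2'" "EE N2' = EE (M2 + fill Cb2 X2)" "erase_ctx Gb2' = erase_ctx Gb2"
    using lift_addtop[OF l21(3)] by blast
  obtain M2' W2 where l23: "N2' = M2' + W2" "EE M2' = EE M2" "EE W2 = EE (fill Cb2 X2)"
    using lift_plus[of N2' "EE M2" "EE (fill Cb2 X2)"] l22(2) by auto
  obtain Cb2' X2' where l24: "W2 = fill Cb2' X2'" "erase_ctx Cb2' = erase_ctx Cb2" "EE X2' = EE X2"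
    using lift_fill[OF l23(3)] by blast
  obtain X' where X': "EE X' = EE X" "\<And>C1 C2 C. der Ac (fill C1 X1') \<Longrightarrow> der Ac (fill C2 X2') \<Longrightarrow> merge_ctx C1 C2 C \<Longrightarrow> der Ac (fill C X')"
    using rl[OF l14(3) l24(3)] by blast
  obtain R'' where mR: "merge_ctx R1' R2' R''" using merge_ctx_exists l11(2) l21(2) eR by metis
  obtain M'' where mM: "merge_ms M1' M2' M''" using merge_ms_exists l13(2) l23(2) eM by metis
  obtain Gb'' where mGb: "merge_ctx Gb1' Gb2' Gb''" using merge_ctx_exists l12(3) l22(3) eGb by metis
  obtain \<Delta>'' where mD: "merge_ms \<Delta>1' \<Delta>2' \<Delta>''" using merge_ms_exists g1(2) g2(2) eDl by metis
  obtain Cb'' where mCb: "merge_ctx Cb1' Cb2' Cb''" using merge_ctx_exists l14(2) l24(2) eCb by metis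
  let ?y1 = "Br ({#D E \<Sigma>1', D (neg B) Y1#} + \<Delta>1') b"
  let ?y2 = "Br ({#D E \<Sigma>2', D (neg B) Y2#} + \<Delta>2') b"
  let ?y = "Br ({#D E (\<Sigma>1' |\<union>| \<Sigma>2'), D (neg B) (Y1 |\<union>| Y2)#} + \<Delta>'') b"
  have d1: "der Ac (fill (cmp R1' (addtop (M1' + fill Gb1' {#?y1#}) Cb1')) X1')"
    using g1(4) l11(1) l12(1) l13(1) l14(1) by (simp add: ac_simps)
  have d2: "der Ac (fill (cmp R2' (addtop (M2' + fill Gb2' {#?y2#}) Cb2')) X2')"
    using g2(4) l21(1) l22(1) l23(1) l24(1) by (simp add: ac_simps)
  have "der Ac (fill (cmp R'' (addtop (M'' + fill Gb'' {#?y#}) Cb'')) X')"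
    by (rule X'(2)[OF d1 d2 build_C[OF mR mM mGb mD mCb]])
  then have d: "der Ac (fill (cmp R'' (addtop (M'' + fill Cb'' X') Gb'')) {#?y#})" by (simp add: ac_simps)
  have eG: "erase_ctx (cmp R'' (addtop (M'' + fill Cb'' X') Gb'')) = erase_ctx G"
    using G merge_ctx_erase[OF mR] merge_ms_erase[OF mM] merge_ctx_erase[OF mGb] merge_ctx_erase[OF mCb]
      l11(2) l13(2) l12(3) l14(2) eR eM eGb eCb X'(1) by simp
  have eD: "EE \<Delta>'' = EE \<Delta>" using merge_ms_erase[OF mD] g1(2) eDl by simp
  have sS: "\<Sigma>1' |\<union>| \<Sigma>2' |\<subseteq>| \<Sigma> |-| {|B|}" using g1(3) g2(3) mc(8) by auto
  show ?thesis by (rule goalI[OF eG eD sS d])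
qed


lemma step1A:
  assumes IH: "\<And>G \<Sigma> \<Delta>. fill C X1 = fill G {#Br (add_mset (D E \<Sigma>) \<Delta>) b#} \<Longrightarrow> noB B \<Delta> \<Longrightarrow> goal Ac E B b G \<Sigma> \<Delta>"
  and rl: "\<And>X1'. EE X1' = EE X1 \<Longrightarrow> \<exists>X'. EE X' = EE X \<and> (\<forall>C. der Ac (fill C X1') \<longrightarrow> der Ac (fill C X'))"
  and nb1: "noB B X1 = noB B X"
  and C: "C = cmp G (CBr {#} (addtop {#D E \<Sigma>#} Q') b)"
  and \<Delta>: "\<Delta> = fill Q' X"
  and nb: "noB B \<Delta>"
  shows "goal Ac E B b G \<Sigma> \<Delta>"
proof -
  have e1: "fill C X1 = fill G {#Br (add_mset (D E \<Sigma>) (fill Q' X1)) b#}" using C by simp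
  have e2: "noB B (fill Q' X1)" using noB_fill[of B Q' X] noB_fill[of B Q' X1] nb nb1 \<Delta> by simp
  have "goal Ac E B b G \<Sigma> (fill Q' X1)" by (rule IH[OF e1 e2])
  then obtain G' \<Delta>1 \<Sigma>' Y where g: "erase_ctx G' = erase_ctx G" "EE \<Delta>1 = EE (fill Q' X1)" "\<Sigma>' |\<subseteq>| \<Sigma> |-| {|B|}"
     "der Ac (fill G' {#Br ({#D E \<Sigma>', D (neg B) Y#} + \<Delta>1) b#})"
    unfolding goal_def by blast
  obtain Q'' X1' where l: "\<Delta>1 = fill Q'' X1'" "erase_ctx Q'' = erase_ctx Q'" "EE X1' = EE X1"
    using lift_fill[OF g(2)] by blast
  obtain X' where X': "EE X' = EE X" "\<And>C. der Ac (fill C X1') \<Longrightarrow> der Ac (fill C X')"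
    using rl[OF l(3)] by blast
  have "der Ac (fill (cmp G' (CBr {#} (addtop {#D E \<Sigma>', D (neg B) Y#} Q'') b)) X1')"
    using g(4) l(1) by simp
  then have "der Ac (fill (cmp G' (CBr {#} (addtop {#D E \<Sigma>', D (neg B) Y#} Q'') b)) X')" by (rule X'(2))
  then have d: "der Ac (fill G' {#Br ({#D E \<Sigma>', D (neg B) Y#} + fill Q'' X') b#})" by simp
  have e: "EE (fill Q'' X') = EE \<Delta>" using \<Delta> l(2) X'(1) by simp
  show ?thesis by (rule goalI[OF g(1) e g(3) d])
qed

lemma step1C:
  assumes IH: "\<And>G \<Sigma> \<Delta>. fill C X1 = fill G {#Br (add_mset (D E \<Sigma>) \<Delta>) b#} \<Longrightarrow> noB B \<Delta> \<Longrightarrow> goal Ac E B b G \<Sigma> \<Delta>"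
  and rl: "\<And>X1'. EE X1' = EE X1 \<Longrightarrow> \<exists>X'. EE X' = EE X \<and> (\<forall>C. der Ac (fill C X1') \<longrightarrow> der Ac (fill C X'))"
  and C: "C = cmp R (addtop (M + fill Gb {#Br (add_mset (D E \<Sigma>) \<Delta>) b#}) Cb)"
  and G: "G = cmp R (addtop (M + fill Cb X) Gb)"
  and nb: "noB B \<Delta>"
  shows "goal Ac E B b G \<Sigma> \<Delta>"
proof -
  let ?G1 = "cmp R (addtop (M + fill Cb X1) Gb)"
  have e1: "fill C X1 = fill ?G1 {#Br (add_mset (D E \<Sigma>) \<Delta>) b#}" using C by (simp add: ac_simps)
  have "goal Ac E B b ?G1 \<Sigma> \<Delta>" by (rule IH[OF e1 nb])
  then obtain G1' \<Delta>' \<Sigma>' Y where g: "erase_ctx G1' = erase_ctx ?G1" "EE \<Delta>' = EE \<Delta>" "\<Sigma>' |\<subseteq>| \<Sigma> |-| {|B|}"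
     "der Ac (fill G1' {#Br ({#D E \<Sigma>', D (neg B) Y#} + \<Delta>') b#})"
    unfolding goal_def by blast
  obtain R' H' where l1: "G1' = cmp R' H'" "erase_ctx R' = erase_ctx R" "erase_ctx H' = erase_ctx (addtop (M + fill Cb X1) Gb)"
    using lift_cmp[OF g(1)] by blast
  obtain N' Gb' where l2: "H' = addtop N' Gb'" "EE N' = EE (M + fill Cb X1)" "erase_ctx Gb' = erase_ctx Gb"
    using lift_addtop[OF l1(3)] by blast
  obtain M' W where l3: "N' = M' + W" "EE M' = EE M" "EE W = EE (fill Cb X1)"
    using lift_plus[of N' "EE M" "EE (fill Cb X1)"] l2(2) by auto
  obtain Cb' X1' where l4: "W = fill Cb' X1'" "erase_ctx Cb' = erase_ctx Cb" "EE X1' = EE X1"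
    using lift_fill[OF l3(3)] by blast
  obtain X' where X': "EE X' = EE X" "\<And>C. der Ac (fill C X1') \<Longrightarrow> der Ac (fill C X')"
    using rl[OF l4(3)] by blast
  let ?y = "Br ({#D E \<Sigma>', D (neg B) Y#} + \<Delta>') b"
  have "der Ac (fill (cmp R' (addtop (M' + fill Gb' {#?y#}) Cb')) X1')"
    using g(4) l1(1) l2(1) l3(1) l4(1) by (simp add: ac_simps)
  then have "der Ac (fill (cmp R' (addtop (M' + fill Gb' {#?y#}) Cb')) X')" by (rule X'(2))
  then have d: "der Ac (fill (cmp R' (addtop (M' + fill Cb' X') Gb')) {#?y#})" by (simp add: ac_simps)
  have e: "erase_ctx (cmp R' (addtop (M' + fill Cb' X') Gb')) = erase_ctx G"
    using G l1(2) l2(3) l3(2) l4(2) X'(1) by simp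
  show ?thesis by (rule goalI[OF e g(2) g(3) d])
qed

lemma mem_top2: "D E \<Sigma> \<in># fill Q X \<Longrightarrow> (\<exists>Q'. Q = addtop {#D E \<Sigma>#} Q') \<or> (\<exists>N. Q = Hole N \<and> D E \<Sigma> \<in># X)"
proof (cases Q)
  case (Hole N)
  assume a: "D E \<Sigma> \<in># fill Q X"
  show ?thesis
  proof (cases "D E \<Sigma> \<in># X")
    case True then show ?thesis using Hole by blast
  next
    case False then show ?thesis using mem_top[OF a] by blast
  qed
next
  case (CBr N C c)
  assume a: "D E \<Sigma> \<in># fill Q X"
  have "D E \<Sigma> \<notin># {#Br (fill C X) c#}" by simp
  then have "D E \<Sigma> \<in># fill (CBr N C c) {#}" using a CBr by simp
  then show ?thesis using mem_top[of E \<Sigma> Q "{#}"] CBr by auto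
qed

lemma lift_single_D: "EE N = {#D A {||}#} \<Longrightarrow> \<exists>S. N = {#D A S#}"
  by (metis erase_D lift_add image_mset_is_empty_iff)

lemma lift_brfitem: "EE Z = {#Br (add_mset (fitem A {||}) (EE M)) c#} \<Longrightarrow>
   \<exists>Xa' M'. Z = {#Br (add_mset (fitem A Xa') M') c#} \<and> EE M' = EE M"
proof -
  assume "EE Z = {#Br (add_mset (fitem A {||}) (EE M)) c#}"
  then obtain w where w: "Z = {#w#}" "erase w = Br (add_mset (fitem A {||}) (EE M)) c"
    by (metis lift_add image_mset_is_empty_iff)
  then obtain N where N: "w = Br N c" "EE N = add_mset (fitem A {||}) (EE M)" using erase_Br by metis
  then obtain u N' where u: "N = add_mset u N'" "erase u = fitem A {||}" "EE N' = EE M" using lift_add by metis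
  then obtain Xa' where "u = fitem A Xa'" using erase_fitem_inv by metis
  then show ?thesis using w N u by blast
qed

lemma lift_dia: "EE X1' = EE (add_mset (D A S) (fill Dc {#Br (add_mset (fitem A Xa) M) c#})) \<Longrightarrow>
  \<exists>S' Dc' Xa' M'. X1' = add_mset (D A S') (fill Dc' {#Br (add_mset (fitem A Xa') M') c#}) \<and>
     erase_ctx Dc' = erase_ctx Dc \<and> EE M' = EE M"
proof -
  assume "EE X1' = EE (add_mset (D A S) (fill Dc {#Br (add_mset (fitem A Xa) M) c#}))"
  then have "EE X1' = add_mset (D A {||}) (EE (fill Dc {#Br (add_mset (fitem A Xa) M) c#}))" by simp
  then obtain w W where w: "X1' = add_mset w W" "erase w = D A {||}" "EE W = EE (fill Dc {#Br (add_mset (fitem A Xa) M) c#})"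
    using lift_add by metis
  obtain S' where S': "w = D A S'" using erase_D[OF w(2)] by blast
  obtain Dc' Z where l: "W = fill Dc' Z" "erase_ctx Dc' = erase_ctx Dc" "EE Z = EE {#Br (add_mset (fitem A Xa) M) c#}"
    using lift_fill[OF w(3)] by blast
  have "EE Z = {#Br (add_mset (fitem A {||}) (EE M)) c#}" using l(3) by simp
  then obtain Xa' M' where "Z = {#Br (add_mset (fitem A Xa') M') c#}" "EE M' = EE M" using lift_brfitem by blast
  then show ?thesis using w S' l by blast
qed

lemma rl_dia: "EE X1' = EE (add_mset (D A S) (fill Dc {#Br (add_mset (fitem A Xa) M) c#})) \<Longrightarrow>
  \<exists>X'. EE X' = EE (add_mset (D A (finsert c S)) (fill Dc {#Br M c#})) \<and> (\<forall>C. der Ac (fill C X1') \<longrightarrow> der Ac (fill C X'))"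
proof -
  assume "EE X1' = EE (add_mset (D A S) (fill Dc {#Br (add_mset (fitem A Xa) M) c#}))"
  then obtain S' Dc' Xa' M' where l: "X1' = add_mset (D A S') (fill Dc' {#Br (add_mset (fitem A Xa') M') c#})"
     "erase_ctx Dc' = erase_ctx Dc" "EE M' = EE M" using lift_dia by blast
  show ?thesis
    apply (rule exI[of _ "add_mset (D A (finsert c S')) (fill Dc' {#Br M' c#})"])
    using l der.dia[of Ac _ A S' Dc' Xa' M' c] by simp
qed

lemma noB_brfitem: "noB B (fill Q {#Br (add_mset (fitem A Xa) M) c#}) = noB B (fill Q {#Br M c#})"
  using noB_fill[of B Q "{#Br (add_mset (fitem A Xa) M) c#}"] noB_fill[of B Q "{#Br M c#}"]
  by (simp add: noB_def)

lemma cmp_Hole_empty[simp]: "cmp C (Hole {#}) = C"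
  by (induction C) auto

fun topE :: "ctx \<Rightarrow> bool" where "topE (Hole M) = (M = {#})" | "topE (CBr M C c) = (M = {#})"

lemma topE_br: "topE Dc \<Longrightarrow> \<exists>W c'. fill Dc {#Br M c#} = {#Br W c'#}"
  by (cases Dc) auto

lemma lift_single_fitem: "EE N = {#fitem A {||}#} \<Longrightarrow> \<exists>X. N = {#fitem A X#}"
  by (metis erase_fitem_inv lift_add image_mset_is_empty_iff)

lemma noB_add_D[simp]: "noB B (add_mset (D A S) W) = noB B W"
  by (simp add: noB_def)
lemma noB_add_fitem[simp]: "noB B (add_mset (fitem A S) W) = noB B W"
  by (simp add: noB_def)
lemma noB_plus[simp]: "noB B (M + N) = (noB B M \<and> noB B N)"
  by (auto simp: noB_def)
lemma noB_single_Br: "noB B {#Br M c#} = (B \<noteq> c \<and> noB B M)"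
  by (auto simp: noB_def)

lemma step_dia:
  assumes IH: "\<And>G \<Sigma> \<Delta>. fill Gr (add_mset (D A S0) (fill Dc {#Br (add_mset (fitem A Xa) M) c#})) = fill G {#Br (add_mset (D E \<Sigma>) \<Delta>) b#} \<Longrightarrow> noB B \<Delta> \<Longrightarrow> goal Ac E B b G \<Sigma> \<Delta>"
  and top: "topE Dc"
  and eq: "fill Gr (add_mset (D A (finsert c S0)) (fill Dc {#Br M c#})) = fill G {#Br (add_mset (D E \<Sigma>) \<Delta>) b#}"
  and nb: "noB B \<Delta>"
  shows "goal Ac E B b G \<Sigma> \<Delta>"
proof -
  let ?X = "add_mset (D A (finsert c S0)) (fill Dc {#Br M c#})"
  let ?X1 = "add_mset (D A S0) (fill Dc {#Br (add_mset (fitem A Xa) M) c#})"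
  have rl: "\<And>X1'. EE X1' = EE ?X1 \<Longrightarrow> \<exists>X'. EE X' = EE ?X \<and> (\<forall>C. der Ac (fill C X1') \<longrightarrow> der Ac (fill C X'))"
    by (rule rl_dia)
  have nb1: "noB B ?X1 = noB B ?X" using noB_brfitem[of B Dc A Xa M c] by simp
  show ?thesis
  using dec[OF eq]
  proof (elim disjE exE conjE)
    fix Q Z b' assume y: "Br (add_mset (D E \<Sigma>) \<Delta>) b = Br Z b'" and C: "Gr = cmp G (CBr {#} Q b')" and Z: "Z = fill Q ?X"
    then have bb: "b' = b" and eZ: "add_mset (D E \<Sigma>) \<Delta> = fill Q ?X" by auto
    then have mm: "D E \<Sigma> \<in># fill Q ?X" by (metis union_single_eq_member)
    from mem_top2[OF mm] show ?thesis
    proof (elim disjE exE conjE)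
      fix Q' assume Q: "Q = addtop {#D E \<Sigma>#} Q'"
      then have \<Delta>: "\<Delta> = fill Q' ?X" using eZ by simp
      have C': "Gr = cmp G (CBr {#} (addtop {#D E \<Sigma>#} Q') b)" using C Q bb by simp
      show ?thesis by (rule step1A[OF IH rl nb1 C' \<Delta> nb])
    next
      fix N assume Q: "Q = Hole N" and dX: "D E \<Sigma> \<in># ?X"
      obtain W c' where Wc: "fill Dc {#Br M c#} = {#Br W c'#}" using topE_br[OF top] by blast
      have "D E \<Sigma> = D A (finsert c S0)" using dX Wc by simp
      then have EA: "E = A" and \<Sigma>: "\<Sigma> = finsert c S0" by auto
      have \<Delta>: "\<Delta> = N + fill Dc {#Br M c#}" using eZ Q \<open>D E \<Sigma> = D A (finsert c S0)\<close> by simp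
      have "noB B (fill Dc {#Br M c#})" using nb \<Delta> by simp
      then have cB: "B \<noteq> c" using noB_fill[of B Dc "{#Br M c#}"] noB_single_Br by simp
      let ?\<Delta>1 = "N + fill Dc {#Br (add_mset (fitem A Xa) M) c#}"
      have e1: "fill Gr ?X1 = fill G {#Br (add_mset (D E S0) ?\<Delta>1) b#}" using C Q bb EA by (simp add: ac_simps)
      have e2: "noB B ?\<Delta>1" using nb \<Delta> noB_brfitem[of B Dc A Xa M c] by simp
      have "goal Ac E B b G S0 ?\<Delta>1" by (rule IH[OF e1 e2])
      then obtain G' \<Delta>1 S0' Y where g: "erase_ctx G' = erase_ctx G" "EE \<Delta>1 = EE ?\<Delta>1" "S0' |\<subseteq>| S0 |-| {|B|}"
         "der Ac (fill G' {#Br ({#D E S0', D (neg B) Y#} + \<Delta>1) b#})"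
        unfolding goal_def by blast
      obtain N' W where l1: "\<Delta>1 = N' + W" "EE N' = EE N" "EE W = EE (fill Dc {#Br (add_mset (fitem A Xa) M) c#})"
        using lift_plus[of \<Delta>1 "EE N" "EE (fill Dc {#Br (add_mset (fitem A Xa) M) c#})"] g(2) by auto
      obtain Dc' Z' where l2: "W = fill Dc' Z'" "erase_ctx Dc' = erase_ctx Dc" "EE Z' = EE {#Br (add_mset (fitem A Xa) M) c#}"
        using lift_fill[OF l1(3)] by blast
      have "EE Z' = {#Br (add_mset (fitem A {||}) (EE M)) c#}" using l2(3) by simp
      then obtain Xa' M' where l3: "Z' = {#Br (add_mset (fitem A Xa') M') c#}" "EE M' = EE M" using lift_brfitem by blast
      have "der Ac (fill (cmp G' (CBr {#} (Hole (add_mset (D (neg B) Y) N')) b)) (add_mset (D E S0') (fill Dc' {#Br (add_mset (fitem E Xa') M') c#})))"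
        using g(4) l1(1) l2(1) l3(1) EA by (simp add: ac_simps)
      from der.dia[OF this]
      have d: "der Ac (fill G' {#Br ({#D E (finsert c S0'), D (neg B) Y#} + (N' + fill Dc' {#Br M' c#})) b#})"
        by (simp add: ac_simps)
      have eD: "EE (N' + fill Dc' {#Br M' c#}) = EE \<Delta>" using \<Delta> l1(2) l2(2) l3(2) by simp
      have sS: "finsert c S0' |\<subseteq>| \<Sigma> |-| {|B|}" using g(3) \<Sigma> cB by auto
      show ?thesis by (rule goalI[OF g(1) eD sS d])
    qed
  next
    fix Qb assume G: "G = cmp Gr Qb" and X: "?X = fill Qb {#Br (add_mset (D E \<Sigma>) \<Delta>) b#}"
    have pm: "D A (finsert c S0) \<in># fill Qb {#Br (add_mset (D E \<Sigma>) \<Delta>) b#}" using X by (metis union_single_eq_member)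
    obtain Q0 where Q0: "Qb = addtop {#D A (finsert c S0)#} Q0" using mem_top[OF pm] by auto
    have eq2: "fill Dc {#Br M c#} = fill Q0 {#Br (add_mset (D E \<Sigma>) \<Delta>) b#}" using X Q0 by simp
    show ?thesis
    using dec[OF eq2]
    proof (elim disjE exE conjE)
      fix Q1 Z b' assume y: "Br (add_mset (D E \<Sigma>) \<Delta>) b = Br Z b'" and Dc: "Dc = cmp Q0 (CBr {#} Q1 b')" and Z: "Z = fill Q1 {#Br M c#}"
      then have bb: "b' = b" and eZ: "add_mset (D E \<Sigma>) \<Delta> = fill Q1 {#Br M c#}" by auto
      then have mm: "D E \<Sigma> \<in># fill Q1 {#Br M c#}" by (metis union_single_eq_member)
      obtain Q1' where Q1: "Q1 = addtop {#D E \<Sigma>#} Q1'" using mem_top[OF mm] by auto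
      have \<Delta>: "\<Delta> = fill Q1' {#Br M c#}" using eZ Q1 by simp
      let ?M1 = "add_mset (fitem A Xa) M"
      let ?G1 = "cmp Gr (addtop {#D A S0#} Q0)"
      have e1: "fill Gr ?X1 = fill ?G1 {#Br (add_mset (D E \<Sigma>) (fill Q1' {#Br ?M1 c#})) b#}" using Dc Q1 bb by simp
      have e2: "noB B (fill Q1' {#Br ?M1 c#})" using nb \<Delta> noB_brfitem[of B Q1' A Xa M c] by simp
      have "goal Ac E B b ?G1 \<Sigma> (fill Q1' {#Br ?M1 c#})" by (rule IH[OF e1 e2])
      then obtain G' \<Delta>1 \<Sigma>' Y where g: "erase_ctx G' = erase_ctx ?G1" "EE \<Delta>1 = EE (fill Q1' {#Br ?M1 c#})" "\<Sigma>' |\<subseteq>| \<Sigma> |-| {|B|}"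
         "der Ac (fill G' {#Br ({#D E \<Sigma>', D (neg B) Y#} + \<Delta>1) b#})"
        unfolding goal_def by blast
      obtain Gr' H' where l1: "G' = cmp Gr' H'" "erase_ctx Gr' = erase_ctx Gr" "erase_ctx H' = erase_ctx (addtop {#D A S0#} Q0)"
        using lift_cmp[OF g(1)] by blast
      obtain N' Q0' where l2: "H' = addtop N' Q0'" "EE N' = EE {#D A S0#}" "erase_ctx Q0' = erase_ctx Q0"
        using lift_addtop[OF l1(3)] by blast
      obtain S0' where l3: "N' = {#D A S0'#}" using lift_single_D l2(2) by auto
      obtain Q1'' Z' where l4: "\<Delta>1 = fill Q1'' Z'" "erase_ctx Q1'' = erase_ctx Q1'" "EE Z' = EE {#Br ?M1 c#}"
        using lift_fill[OF g(2)] by blast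
      have "EE Z' = {#Br (add_mset (fitem A {||}) (EE M)) c#}" using l4(3) by simp
      then obtain Xa' M' where l5: "Z' = {#Br (add_mset (fitem A Xa') M') c#}" "EE M' = EE M" using lift_brfitem by blast
      let ?Dc' = "cmp Q0' (CBr {#} (addtop {#D E \<Sigma>', D (neg B) Y#} Q1'') b)"
      have "der Ac (fill Gr' (add_mset (D A S0') (fill ?Dc' {#Br (add_mset (fitem A Xa') M') c#})))"
        using g(4) l1(1) l2(1) l3 l4(1) l5(1) by simp
      from der.dia[OF this]
      have d: "der Ac (fill (cmp Gr' (addtop {#D A (finsert c S0')#} Q0')) {#Br ({#D E \<Sigma>', D (neg B) Y#} + fill Q1'' {#Br M' c#}) b#})"
        by simp
      have eG: "erase_ctx (cmp Gr' (addtop {#D A (finsert c S0')#} Q0')) = erase_ctx G" using G Q0 l1(2) l2(3) by simp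
      have eD: "EE (fill Q1'' {#Br M' c#}) = EE \<Delta>" using \<Delta> l4(2) l5(2) by simp
      show ?thesis by (rule goalI[OF eG eD g(3) d])
    next
      fix Q2 assume Q0': "Q0 = cmp Dc Q2" and e3: "{#Br M c#} = fill Q2 {#Br (add_mset (D E \<Sigma>) \<Delta>) b#}"
      show ?thesis
      proof (cases Q2)
        case (Hole N)
        then have N: "N = {#}" and bc: "b = c" and M: "M = add_mset (D E \<Sigma>) \<Delta>" using e3 by auto
        let ?G1 = "cmp Gr (addtop {#D A S0#} Dc)"
        let ?\<Delta>1 = "add_mset (fitem A Xa) \<Delta>"
        have e1: "fill Gr ?X1 = fill ?G1 {#Br (add_mset (D E \<Sigma>) ?\<Delta>1) b#}" using M bc by (simp add: add_mset_commute)
        have e2: "noB B ?\<Delta>1" using nb by simp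
        have "goal Ac E B b ?G1 \<Sigma> ?\<Delta>1" by (rule IH[OF e1 e2])
        then obtain G' \<Delta>1 \<Sigma>' Y where g: "erase_ctx G' = erase_ctx ?G1" "EE \<Delta>1 = EE ?\<Delta>1" "\<Sigma>' |\<subseteq>| \<Sigma> |-| {|B|}"
           "der Ac (fill G' {#Br ({#D E \<Sigma>', D (neg B) Y#} + \<Delta>1) b#})"
          unfolding goal_def by blast
        obtain Gr' H' where l1: "G' = cmp Gr' H'" "erase_ctx Gr' = erase_ctx Gr" "erase_ctx H' = erase_ctx (addtop {#D A S0#} Dc)"
          using lift_cmp[OF g(1)] by blast
        obtain N' Dc' where l2: "H' = addtop N' Dc'" "EE N' = EE {#D A S0#}" "erase_ctx Dc' = erase_ctx Dc"
          using lift_addtop[OF l1(3)] by blast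
        obtain S0' where l3: "N' = {#D A S0'#}" using lift_single_D l2(2) by auto
        have "EE \<Delta>1 = add_mset (fitem A {||}) (EE \<Delta>)" using g(2) by simp
        then obtain w \<Delta>' where l4: "\<Delta>1 = add_mset w \<Delta>'" "erase w = fitem A {||}" "EE \<Delta>' = EE \<Delta>" using lift_add by metis
        obtain Xa' where l5: "w = fitem A Xa'" using erase_fitem_inv[OF l4(2)] by blast
        have "der Ac (fill Gr' (add_mset (D A S0') (fill Dc' {#Br (add_mset (fitem A Xa') ({#D E \<Sigma>', D (neg B) Y#} + \<Delta>')) c#})))"
          using g(4) l1(1) l2(1) l3 l4(1) l5 bc by (simp add: add_mset_commute)
        from der.dia[OF this]
        have d: "der Ac (fill (cmp Gr' (addtop {#D A (finsert c S0')#} Dc')) {#Br ({#D E \<Sigma>', D (neg B) Y#} + \<Delta>') b#})"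
          using bc by simp
        have eG: "erase_ctx (cmp Gr' (addtop {#D A (finsert c S0')#} Dc')) = erase_ctx G" using G Q0 Q0' Hole N l1(2) l2(3) by simp
        show ?thesis by (rule goalI[OF eG l4(3) g(3) d])
      next
        case (CBr N Q3 e)
        then have N: "N = {#}" and ec: "e = c" and M: "M = fill Q3 {#Br (add_mset (D E \<Sigma>) \<Delta>) b#}" using e3 by auto
        let ?y = "Br (add_mset (D E \<Sigma>) \<Delta>) b"
        let ?G1 = "cmp Gr (addtop {#D A S0#} (cmp Dc (CBr {#} (addtop {#fitem A Xa#} Q3) c)))"
        have e1: "fill Gr ?X1 = fill ?G1 {#?y#}" using M by simp
        have "goal Ac E B b ?G1 \<Sigma> \<Delta>" by (rule IH[OF e1 nb])
        then obtain G' \<Delta>' \<Sigma>' Y where g: "erase_ctx G' = erase_ctx ?G1" "EE \<Delta>' = EE \<Delta>" "\<Sigma>' |\<subseteq>| \<Sigma> |-| {|B|}"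
           "der Ac (fill G' {#Br ({#D E \<Sigma>', D (neg B) Y#} + \<Delta>') b#})"
          unfolding goal_def by blast
        obtain Gr' H1 where l1: "G' = cmp Gr' H1" "erase_ctx Gr' = erase_ctx Gr" "erase_ctx H1 = erase_ctx (addtop {#D A S0#} (cmp Dc (CBr {#} (addtop {#fitem A Xa#} Q3) c)))"
          using lift_cmp[OF g(1)] by blast
        obtain N1 H2 where l2: "H1 = addtop N1 H2" "EE N1 = EE {#D A S0#}" "erase_ctx H2 = erase_ctx (cmp Dc (CBr {#} (addtop {#fitem A Xa#} Q3) c))"
          using lift_addtop[OF l1(3)] by blast
        obtain S0' where l3: "N1 = {#D A S0'#}" using lift_single_D l2(2) by auto
        obtain Dc' H3 where l4: "H2 = cmp Dc' H3" "erase_ctx Dc' = erase_ctx Dc" "erase_ctx H3 = erase_ctx (CBr {#} (addtop {#fitem A Xa#} Q3) c)"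
          using lift_cmp[OF l2(3)] by blast
        obtain K H4 where l5: "H3 = CBr K H4 c" "EE K = EE {#}" "erase_ctx H4 = erase_ctx (addtop {#fitem A Xa#} Q3)"
          using lift_CBr[OF l4(3)] by blast
        obtain N4 Q3' where l6: "H4 = addtop N4 Q3'" "EE N4 = EE {#fitem A Xa#}" "erase_ctx Q3' = erase_ctx Q3"
          using lift_addtop[OF l5(3)] by blast
        obtain Xa' where l7: "N4 = {#fitem A Xa'#}" using lift_single_fitem l6(2) by auto
        let ?y' = "Br ({#D E \<Sigma>', D (neg B) Y#} + \<Delta>') b"
        have "der Ac (fill Gr' (add_mset (D A S0') (fill Dc' {#Br (add_mset (fitem A Xa') (fill Q3' {#?y'#})) c#})))"
          using g(4) l1(1) l2(1) l3 l4(1) l5 l6(1) l7 by simp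
        from der.dia[OF this]
        have d: "der Ac (fill (cmp Gr' (addtop {#D A (finsert c S0')#} (cmp Dc' (CBr {#} Q3' c)))) {#?y'#})"
          by simp
        have eG: "erase_ctx (cmp Gr' (addtop {#D A (finsert c S0')#} (cmp Dc' (CBr {#} Q3' c)))) = erase_ctx G"
          using G Q0 Q0' CBr N ec l1(2) l4(2) l6(3) by simp
        show ?thesis by (rule goalI[OF eG g(2) g(3) d])
      qed
    next
      fix R Mx Cb Gb
      assume Dc: "Dc = cmp R (addtop (Mx + fill Gb {#Br (add_mset (D E \<Sigma>) \<Delta>) b#}) Cb)"
         and Q0': "Q0 = cmp R (addtop (Mx + fill Cb {#Br M c#}) Gb)"
      let ?y = "Br (add_mset (D E \<Sigma>) \<Delta>) b"
      let ?M1 = "add_mset (fitem A Xa) M"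
      let ?G1 = "cmp Gr (addtop {#D A S0#} (cmp R (addtop (Mx + fill Cb {#Br ?M1 c#}) Gb)))"
      have e1: "fill Gr ?X1 = fill ?G1 {#?y#}" using Dc by (simp add: ac_simps)
      have "goal Ac E B b ?G1 \<Sigma> \<Delta>" by (rule IH[OF e1 nb])
      then obtain G' \<Delta>' \<Sigma>' Y where g: "erase_ctx G' = erase_ctx ?G1" "EE \<Delta>' = EE \<Delta>" "\<Sigma>' |\<subseteq>| \<Sigma> |-| {|B|}"
         "der Ac (fill G' {#Br ({#D E \<Sigma>', D (neg B) Y#} + \<Delta>') b#})"
        unfolding goal_def by blast
      obtain Gr' H1 where l1: "G' = cmp Gr' H1" "erase_ctx Gr' = erase_ctx Gr" "erase_ctx H1 = erase_ctx (addtop {#D A S0#} (cmp R (addtop (Mx + fill Cb {#Br ?M1 c#}) Gb)))"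
        using lift_cmp[OF g(1)] by blast
      obtain N1 H2 where l2: "H1 = addtop N1 H2" "EE N1 = EE {#D A S0#}" "erase_ctx H2 = erase_ctx (cmp R (addtop (Mx + fill Cb {#Br ?M1 c#}) Gb))"
        using lift_addtop[OF l1(3)] by blast
      obtain S0' where l3: "N1 = {#D A S0'#}" using lift_single_D l2(2) by auto
      obtain R' H3 where l4: "H2 = cmp R' H3" "erase_ctx R' = erase_ctx R" "erase_ctx H3 = erase_ctx (addtop (Mx + fill Cb {#Br ?M1 c#}) Gb)"
        using lift_cmp[OF l2(3)] by blast
      obtain N3 Gb' where l5: "H3 = addtop N3 Gb'" "EE N3 = EE (Mx + fill Cb {#Br ?M1 c#})" "erase_ctx Gb' = erase_ctx Gb"
        using lift_addtop[OF l4(3)] by blast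
      obtain Mx' W where l6: "N3 = Mx' + W" "EE Mx' = EE Mx" "EE W = EE (fill Cb {#Br ?M1 c#})"
        using lift_plus[of N3 "EE Mx" "EE (fill Cb {#Br ?M1 c#})"] l5(2) by auto
      obtain Cb' Z' where l7: "W = fill Cb' Z'" "erase_ctx Cb' = erase_ctx Cb" "EE Z' = EE {#Br ?M1 c#}"
        using lift_fill[OF l6(3)] by blast
      have "EE Z' = {#Br (add_mset (fitem A {||}) (EE M)) c#}" using l7(3) by simp
      then obtain Xa' M' where l8: "Z' = {#Br (add_mset (fitem A Xa') M') c#}" "EE M' = EE M" using lift_brfitem by blast
      let ?y' = "Br ({#D E \<Sigma>', D (neg B) Y#} + \<Delta>') b"
      have "der Ac (fill Gr' (add_mset (D A S0') (fill (cmp R' (addtop (Mx' + fill Gb' {#?y'#}) Cb')) {#Br (add_mset (fitem A Xa') M') c#})))"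
        using g(4) l1(1) l2(1) l3 l4(1) l5(1) l6(1) l7(1) l8(1) by (simp add: ac_simps)
      from der.dia[OF this]
      have d: "der Ac (fill (cmp Gr' (addtop {#D A (finsert c S0')#} (cmp R' (addtop (Mx' + fill Cb' {#Br M' c#}) Gb')))) {#?y'#})"
        by (simp add: ac_simps)
      have eG: "erase_ctx (cmp Gr' (addtop {#D A (finsert c S0')#} (cmp R' (addtop (Mx' + fill Cb' {#Br M' c#}) Gb')))) = erase_ctx G"
        using G Q0 Q0' l1(2) l4(2) l5(3) l6(2) l7(2) l8(2) by simp
      show ?thesis by (rule goalI[OF eG g(2) g(3) d])
    qed
  next
    fix R Mx Cb Gb
    assume C: "Gr = cmp R (addtop (Mx + fill Gb {#Br (add_mset (D E \<Sigma>) \<Delta>) b#}) Cb)"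
       and G: "G = cmp R (addtop (Mx + fill Cb ?X) Gb)"
    show ?thesis by (rule step1C[OF IH rl C G nb])
  qed
qed


lemma erase_idem[simp]: "erase (erase i) = erase i"
  by (induction i) (auto simp: multiset.map_comp comp_def intro: multiset.map_cong0)

lemma EE_idem[simp]: "EE (EE M) = EE M"
  by (simp add: multiset.map_comp comp_def)

lemma erase_ctx_idem[simp]: "erase_ctx (erase_ctx C) = erase_ctx C"
  by (induction C) auto

lemma wf_EE_fill: "(\<forall>i\<in>#fill (erase_ctx G) (EE X). wf_item i) = (\<forall>i\<in>#fill G X. wf_item i)"
  by (metis erase_fill wf_EE)

lemma ae_EE: "\<forall>i\<in>#EE M. allempty_item i" by simp

lemma ae_fill_erase: "\<forall>i\<in>#fill (erase_ctx G) {#}. allempty_item i"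
  using ae_EE[of "fill G {#}"] by simp

lemma box_GI:
  assumes wf: "\<forall>i\<in>#fill G {#Br (add_mset (D E \<Sigma>) (fill Q' {#F (Box B)#})) b#}. wf_item i"
  shows "goal Ac E B b G \<Sigma> (fill Q' {#F (Box B)#})"
proof -
  let ?G0 = "erase_ctx G" and ?Q0 = "erase_ctx Q'"
  let ?K = "cmp ?G0 (CBr {#} (addtop {#D E {||}, D (neg B) {||}#} (cmp ?Q0 (CBr {#} (Hole {#D (neg B) {||}#}) B))) b)"
  have w1: "\<forall>i\<in>#fill G {#}. wf_item i" using wf by simp
  have w2: "\<forall>i\<in>#fill Q' {#}. wf_item i" using wf by simp
  have w1': "\<forall>i\<in>#fill ?G0 {#}. wf_item i" using w1 wf_EE_fill[of G "{#}"] by simp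
  have w2': "\<forall>i\<in>#fill ?Q0 {#}. wf_item i" using w2 wf_EE_fill[of Q' "{#}"] by simp
  have a1: "\<forall>i\<in>#fill ?G0 {#}. allempty_item i" by (rule ae_fill_erase)
  have a2: "\<forall>i\<in>#fill ?Q0 {#}. allempty_item i" by (rule ae_fill_erase)
  have h: "\<forall>i\<in>#fill ?K {#}. wf_item i \<and> allempty_item i"
    using w1' w2' a1 a2 by auto
  obtain X1 Y1 where g: "der Ac (fill ?K {#fitem B X1, fitem (neg B) Y1#})" using GI[OF h] by blast
  have "der Ac (fill (cmp ?G0 (CBr {#} (Hole {#D E {||}#}) b)) (add_mset (D (neg B) {||}) (fill ?Q0 {#Br (add_mset (fitem (neg B) Y1) {#D (neg B) {||}, fitem B X1#}) B#})))"
    using g by (simp add: ac_simps add_mset_commute)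
  from der.dia[OF this]
  have "der Ac (fill (cmp ?G0 (CBr {#} (addtop {#D E {||}, D (neg B) {|B|}#} ?Q0) b)) {#Br {#D (neg B) {||}, fitem B X1#} B#})"
    by (simp add: ac_simps add_mset_commute)
  from der.box[OF this]
  have d: "der Ac (fill ?G0 {#Br ({#D E {||}, D (neg B) {|B|}#} + fill ?Q0 {#F (Box B)#}) b#})" by simp
  have eD: "EE (fill ?Q0 {#F (Box B)#}) = EE (fill Q' {#F (Box B)#})" by simp
  show ?thesis by (rule goalI[OF erase_ctx_idem eD _ d]) simp
qed

lemma top_split: "\<exists>K Dc0. Dc = addtop K Dc0 \<and> topE Dc0"
proof (cases Dc)
  case (Hole M) then show ?thesis by (intro exI[of _ M] exI[of _ "Hole {#}"]) auto
next
  case (CBr M C c) then show ?thesis by (intro exI[of _ M] exI[of _ "CBr {#} C c"]) auto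
qed

lemma ae_item_of: "\<forall>i\<in>#fill G {#y#}. allempty_item i \<Longrightarrow> allempty_item y"
  by simp

lemma ax_ins:
  assumes eq: "fill C {#F (NAt a), F (At a)#} = fill G {#Br (add_mset (D E \<Sigma>) \<Delta>) b#}"
  shows "\<exists>C'. fill G {#Br (add_mset (D E \<Sigma>) (add_mset w \<Delta>)) b#} = fill C' {#F (NAt a), F (At a)#}"
  using dec[OF eq]
proof (elim disjE exE conjE)
  fix Q Z b' assume y: "Br (add_mset (D E \<Sigma>) \<Delta>) b = Br Z b'" and C: "C = cmp G (CBr {#} Q b')" and Z: "Z = fill Q {#F (NAt a), F (At a)#}"
  then have bb: "b' = b" and eZ: "add_mset (D E \<Sigma>) \<Delta> = fill Q {#F (NAt a), F (At a)#}" by auto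
  then have mm: "D E \<Sigma> \<in># fill Q {#F (NAt a), F (At a)#}" by (metis union_single_eq_member)
  obtain Q' where Q: "Q = addtop {#D E \<Sigma>#} Q'" using mem_top[OF mm] by auto
  then have "\<Delta> = fill Q' {#F (NAt a), F (At a)#}" using eZ by simp
  then show ?thesis by (intro exI[of _ "cmp G (CBr {#} (addtop {#D E \<Sigma>, w#} Q') b)"]) simp
next
  fix Q assume h: "{#F (NAt a), F (At a)#} = fill Q {#Br (add_mset (D E \<Sigma>) \<Delta>) b#}"
  have "\<exists>i\<in>#{#F (NAt a), F (At a)#}. isBr i" unfolding h by (rule hasBr)
  then show ?thesis by auto
next
  fix R M Cb Gb
  assume C: "C = cmp R (addtop (M + fill Gb {#Br (add_mset (D E \<Sigma>) \<Delta>) b#}) Cb)"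
     and G: "G = cmp R (addtop (M + fill Cb {#F (NAt a), F (At a)#}) Gb)"
  show ?thesis using G by (intro exI[of _ "cmp R (addtop (M + fill Gb {#Br (add_mset (D E \<Sigma>) (add_mset w \<Delta>)) b#}) Cb)"]) (simp add: ac_simps)
qed

lemma main_gen:
  "der Ac S \<Longrightarrow> S = fill G {#Br (add_mset (D E \<Sigma>) \<Delta>) b#} \<Longrightarrow> noB B \<Delta> \<Longrightarrow> goal Ac E B b G \<Sigma> \<Delta>"
proof (induction arbitrary: G \<Sigma> \<Delta> rule: der.induct)
  case (ax S C a)
  have "allempty_item (Br (add_mset (D E \<Sigma>) \<Delta>) b)" using ax.hyps(3) ax.prems(1) by simp
  then have \<Sigma>: "\<Sigma> = {||}" by simp
  obtain C' where C': "fill G {#Br (add_mset (D E \<Sigma>) (add_mset (D (neg B) {||}) \<Delta>)) b#} = fill C' {#F (NAt a), F (At a)#}"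
    using ax_ins[of C a G E \<Sigma> \<Delta> b "D (neg B) {||}"] ax.hyps(1) ax.prems(1) by auto
  have wae: "\<forall>i\<in>#fill G {#Br (add_mset (D E \<Sigma>) \<Delta>) b#}. wf_item i \<and> allempty_item i"
    using ax.hyps(2,3) ax.prems(1) by auto
  then have wae2: "\<forall>i\<in>#fill G {#Br (add_mset (D E \<Sigma>) (add_mset (D (neg B) {||}) \<Delta>)) b#}. wf_item i \<and> allempty_item i"
    by simp
  have "der Ac (fill C' {#F (NAt a), F (At a)#})"
    by (rule der.ax[OF refl]) (use wae2 C' in auto)
  then have d: "der Ac (fill G {#Br ({#D E {||}, D (neg B) {||}#} + \<Delta>) b#})" using C' \<Sigma> by simp
  show ?case by (rule goalI[OF refl refl _ d]) simp
next
  case (conj C1 A X C2 B' Y C)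
  have rl: "\<And>X1' X2'. EE X1' = EE {#fitem A X#} \<Longrightarrow> EE X2' = EE {#fitem B' Y#} \<Longrightarrow> \<exists>X'. EE X' = EE {#F (And A B')#} \<and>
      (\<forall>C1 C2 C. der Ac (fill C1 X1') \<longrightarrow> der Ac (fill C2 X2') \<longrightarrow> merge_ctx C1 C2 C \<longrightarrow> der Ac (fill C X'))"
  proof -
    fix X1' X2' assume "EE X1' = EE {#fitem A X#}" "EE X2' = EE {#fitem B' Y#}"
    then obtain Xa Ya where "X1' = {#fitem A Xa#}" "X2' = {#fitem B' Ya#}" using lift_single_fitem by (metis erase_fitem image_mset_single)
    then show "?thesis X1' X2'" apply (intro exI[of _ "{#F (And A B')#}"]) using der.conj[of Ac _ A Xa _ B' Ya] by auto
  qed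
  show ?case by (rule step2[OF conj.IH(1) conj.IH(2) rl conj.hyps(3) _ _ _ _ conj.prems]) (auto simp: noB_def)
next
  case (disj C A X B' Y)
  have rl: "\<And>X1'. EE X1' = EE {#fitem A X, fitem B' Y#} \<Longrightarrow> \<exists>X'. EE X' = EE {#F (Or A B')#} \<and> (\<forall>C. der Ac (fill C X1') \<longrightarrow> der Ac (fill C X'))"
  proof -
    fix X1' assume "EE X1' = EE {#fitem A X, fitem B' Y#}"
    then have "EE X1' = add_mset (fitem A {||}) {#fitem B' {||}#}" by simp
    then obtain w W where w: "X1' = add_mset w W" "erase w = fitem A {||}" "EE W = {#fitem B' {||}#}" using lift_add by metis
    obtain Xa where "w = fitem A Xa" using erase_fitem_inv[OF w(2)] by blast
    moreover obtain Ya where "W = {#fitem B' Ya#}" using lift_single_fitem[OF w(3)] by blast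
    ultimately show "?thesis X1'" apply (intro exI[of _ "{#F (Or A B')#}"]) using w der.disj[of Ac _ A Xa B' Ya] by auto
  qed
  show ?case by (rule step1[OF disj.IH rl _ _ _ disj.prems]) (auto simp: noB_def)
next
  case (box C A \<Sigma>b Xb)
  have rl: "\<And>X1'. EE X1' = EE {#Br {#D (neg A) \<Sigma>b, fitem A Xb#} A#} \<Longrightarrow> \<exists>X'. EE X' = EE {#F (Box A)#} \<and> (\<forall>C. der Ac (fill C X1') \<longrightarrow> der Ac (fill C X'))"
  proof -
    fix X1' assume "EE X1' = EE {#Br {#D (neg A) \<Sigma>b, fitem A Xb#} A#}"
    then have "EE X1' = {#Br {#D (neg A) {||}, fitem A {||}#} A#}" by simp
    then obtain w where w: "X1' = {#w#}" "erase w = Br {#D (neg A) {||}, fitem A {||}#} A"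
      by (metis lift_add image_mset_is_empty_iff)
    then obtain N where N: "w = Br N A" "EE N = add_mset (D (neg A) {||}) {#fitem A {||}#}" using erase_Br by metis
    then obtain u U where u: "N = add_mset u U" "erase u = D (neg A) {||}" "EE U = {#fitem A {||}#}" using lift_add by metis
    obtain S where "u = D (neg A) S" using erase_D[OF u(2)] by blast
    moreover obtain Xa where "U = {#fitem A Xa#}" using lift_single_fitem[OF u(3)] by blast
    ultimately show "?thesis X1'" apply (intro exI[of _ "{#F (Box A)#}"]) using w N u der.box[of Ac _ A S Xa] by auto
  qed
  have eq: "fill C {#F (Box A)#} = fill G {#Br (add_mset (D E \<Sigma>) \<Delta>) b#}" using box.prems(1) .
  show ?case
  using dec[OF eq]
  proof (elim disjE exE conjE)
    fix Q Z b' assume y: "Br (add_mset (D E \<Sigma>) \<Delta>) b = Br Z b'" and C: "C = cmp G (CBr {#} Q b')" and Z: "Z = fill Q {#F (Box A)#}"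
    then have bb: "b' = b" and eZ: "add_mset (D E \<Sigma>) \<Delta> = fill Q {#F (Box A)#}" by auto
    then have mm: "D E \<Sigma> \<in># fill Q {#F (Box A)#}" by (metis union_single_eq_member)
    obtain Q' where Q: "Q = addtop {#D E \<Sigma>#} Q'" using mem_top[OF mm] by auto
    then have \<Delta>: "\<Delta> = fill Q' {#F (Box A)#}" using eZ by simp
    have C': "C = cmp G (CBr {#} (addtop {#D E \<Sigma>#} Q') b)" using C Q bb by simp
    show ?thesis
    proof (cases "A = B")
      case True
      have "der Ac (fill C {#F (Box A)#})" by (rule der.box[OF box.hyps])
      then have "\<forall>i\<in>#fill C {#F (Box A)#}. wf_item i" by (rule der_wf)
      moreover have eq2: "fill C {#F (Box A)#} = fill G {#Br (add_mset (D E \<Sigma>) (fill Q' {#F (Box B)#})) b#}"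
        using eq \<Delta> True by simp
      ultimately have "\<forall>i\<in>#fill G {#Br (add_mset (D E \<Sigma>) (fill Q' {#F (Box B)#})) b#}. wf_item i"
        by (simp only:)
      then show ?thesis using box_GI \<Delta> True by metis
    next
      case False
      have nb1: "noB B {#Br {#D (neg A) \<Sigma>b, fitem A Xb#} A#} = noB B {#F (Box A)#}" using False by (auto simp: noB_def)
      show ?thesis by (rule step1A[OF box.IH rl nb1 C' \<Delta> box.prems(2)])
    qed
  next
    fix Q assume h: "{#F (Box A)#} = fill Q {#Br (add_mset (D E \<Sigma>) \<Delta>) b#}"
    have "\<exists>i\<in>#{#F (Box A)#}. isBr i" unfolding h by (rule hasBr)
    then show ?thesis by auto
  next
    fix R M Cb Gb
    assume C: "C = cmp R (addtop (M + fill Gb {#Br (add_mset (D E \<Sigma>) \<Delta>) b#}) Cb)"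
       and G: "G = cmp R (addtop (M + fill Cb {#F (Box A)#}) Gb)"
    show ?thesis by (rule step1C[OF box.IH rl C G box.prems(2)])
  qed
next
  case (dia Gr A S0 Dc Xa M c)
  obtain K Dc0 where K: "Dc = addtop K Dc0" "topE Dc0" using top_split by blast
  have IH': "\<And>G \<Sigma> \<Delta>. fill (cmp Gr (Hole K)) (add_mset (D A S0) (fill Dc0 {#Br (add_mset (fitem A Xa) M) c#})) = fill G {#Br (add_mset (D E \<Sigma>) \<Delta>) b#} \<Longrightarrow> noB B \<Delta> \<Longrightarrow> goal Ac E B b G \<Sigma> \<Delta>"
    using dia.IH K(1) by (simp add: ac_simps)
  have eq: "fill (cmp Gr (Hole K)) (add_mset (D A (finsert c S0)) (fill Dc0 {#Br M c#})) = fill G {#Br (add_mset (D E \<Sigma>) \<Delta>) b#}"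
    using dia.prems(1) K(1) by (simp add: ac_simps)
  show ?case by (rule step_dia[OF IH' K(2) eq dia.prems(2)])
next
  case (cut C1 X C2 Y C)
  have rl: "\<And>X1' X2'. EE X1' = EE {#fitem Ac X#} \<Longrightarrow> EE X2' = EE {#fitem (neg Ac) Y#} \<Longrightarrow> \<exists>X'. EE X' = EE {#} \<and>
      (\<forall>C1 C2 C. der Ac (fill C1 X1') \<longrightarrow> der Ac (fill C2 X2') \<longrightarrow> merge_ctx C1 C2 C \<longrightarrow> der Ac (fill C X'))"
  proof -
    fix X1' X2' assume "EE X1' = EE {#fitem Ac X#}" "EE X2' = EE {#fitem (neg Ac) Y#}"
    then obtain Xa Ya where "X1' = {#fitem Ac Xa#}" "X2' = {#fitem (neg Ac) Ya#}" using lift_single_fitem by (metis erase_fitem image_mset_single)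
    then show "?thesis X1' X2'" apply (intro exI[of _ "{#}"]) using der.cut[of Ac _ Xa _ Ya] by auto
  qed
  show ?case by (rule step2[OF cut.IH(1) cut.IH(2) rl cut.hyps(3) _ _ _ _ cut.prems]) (auto simp: noB_def)
qed

theorem mainTheorem7:
  fixes A B b :: fm and G :: ctx and \<Delta> :: seq and \<Sigma> :: "fm fset"
  assumes "der A (fill G {#Br (add_mset (D (neg A) \<Sigma>) \<Delta>) b#})"
    and "B |\<in>| \<Sigma>"
    and "\<forall>i\<in>#\<Delta>. B \<notin> banns i"
  shows "\<exists>G' \<Delta>' \<Sigma>' X. erase_ctx G' = erase_ctx G \<and> image_mset erase \<Delta>' = image_mset erase \<Delta> \<and>
           \<Sigma>' |\<subseteq>| \<Sigma> |-| {|B|} \<and>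
           der A (fill G' {#Br ({#D (neg A) \<Sigma>', D (neg B) X#} + \<Delta>') b#})"
  using main_gen[OF assms(1) refl, of B] assms(3) unfolding goal_def noB_def by blast


end
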